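(* The class of (partial) functions computed by unrestricted tree-to-tree Hennie machines and the class of (partial) functions computed by tree-to-tree Hennie machines are both closed under precomposition by MSO relabelings: if $f:T_\Sigma\rightharpoonup T_\Gamma$ is computed by a uTHM (resp.\ a THM) and $g:T_\Delta\to T_\Sigma$ is an MSO relabeling, then $f\circ g$ is computed by a uTHM (resp.\ a THM).
   Context: Trees: ranked alphabets are finite sets with a rank function to $\mathbb{N}$; $T_\Sigma$ is the set of finite ordered $\Sigma$-labeled trees where a node labeled $\sigma$ has $\mathrm{rank}(\sigma)$ children (nodes are words over positive integers, root $\varepsilon$, $i$-th child of $u$ is $ui$); $T_\Sigma[Y]$ allows extra rank-$0$ leaves labeled in $Y$. An MSO relabeling is a function that preserves the set of nodes of the input tree and changes labels in a way definable in monadic second-order logic: the new label of each node is determined by which of finitely many MSO formulas with one free first-order variable it satisfies (standard notion, e.g.\ Courcelle–Engelfriet). Hennie machines: a uTHM is $(Q,M,\top,\Sigma,\Gamma,q_{init},\delta)$ with finite states $Q$, finite memory symbols $M\ni\top$, $q_{init}\in Q$, partial $\delta:Q\times\Sigma\times M\rightharpoonup T_\Gamma[Q\times M\times D]$, $D=\{\uparrow,1,..,\max\mathrm{rank}\Sigma\}$, leaves $(q',m',d)$ of $\delta(q,\sigma,m)$ having $d\in\{\uparrow,1,..,\mathrm{rank}\sigma\}$. Configurations on $t$ are $(u,q,\mu)$, $\mu:$ nodes$\to M$, initially $(\varepsilon,q_{init},\text{constant }\top)$; the step of $(u,q,\mu)$ is $\delta(q,\mathrm{lab}_t(u),\mu(u))$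 with each leaf $(q',m',d)$ replaced by $(ud,q',\mu[u\mapsto m'])$ ($ud$ the parent if $d=\uparrow$, else the $d$-th child; undefined if nonexistent). Confluent rewriting of configuration leaves by steps from the initial configuration yields the output in $T_\Gamma$, if any. A branch-outputting run is $C_0,..,C_n$ with $C_0$ initial and $C_{i+1}$ a leaf label of the step of $C_i$. A THM is a uTHM for which some $N$ bounds, for all inputs, runs and nodes $u$, the number of $i$ with $C_i$ positioned at $u$. *)

theory Defs
  imports Main
begin

datatype 'a rtree = Node 'a "'a rtree list"

text \<open>A ranked alphabet: a (finite) set of symbols together with a rank function.\<close>
type_synonym 'a ralph = "'a set \<times> ('a \<Rightarrow> nat)"

fun root_lab :: "'a rtree \<Rightarrow> 'a" where
  "root_lab (Node a ts) = a"

fun children :: "'a rtree \<Rightarrow> 'a rtree list" where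
  "children (Node a ts) = ts"

text \<open>Nodes are words over positive integers; root is the empty word and the
  i-th child of u is u @ [i] (i \<ge> 1).\<close>
fun is_node :: "'a rtree \<Rightarrow> nat list \<Rightarrow> bool" where
  "is_node t [] = True"
| "is_node (Node a ts) (i # v) = (1 \<le> i \<and> i \<le> length ts \<and> is_node (ts ! (i - 1)) v)"

definition nodes :: "'a rtree \<Rightarrow> nat list set" where
  "nodes t = {u. is_node t u}"

fun subt :: "'a rtree \<Rightarrow> nat list \<Rightarrow> 'a rtree" where
  "subt t [] = t"
| "subt (Node a ts) (i # v) = subt (ts ! (i - 1)) v"

definition lab :: "'a rtree \<Rightarrow> nat list \<Rightarrow> 'a" where
  "lab t u = root_lab (subt t u)"

fun wf_tree :: "'a ralph \<Rightarrow> 'a rtree \<Rightarrow> bool" where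
  "wf_tree A (Node a ts) = (a \<in> fst A \<and> length ts = snd A a \<and> list_all (wf_tree A) ts)"

text \<open>T_Gamma[Y], with Y-leaves encoded by labels Inr y.\<close>
fun wf_tree_Y :: "'c ralph \<Rightarrow> 'y set \<Rightarrow> ('c + 'y) rtree \<Rightarrow> bool" where
  "wf_tree_Y A Y (Node (Inl c) ts) = (c \<in> fst A \<and> length ts = snd A c \<and> list_all (wf_tree_Y A Y) ts)"
| "wf_tree_Y A Y (Node (Inr y) ts) = (y \<in> Y \<and> ts = [])"

text \<open>First-order variables and set variables are both indexed by nat
  (separate name spaces).\<close>
datatype 'a mso =
    Lab 'a nat
  | Child nat nat nat
  | Elem nat nat
  | EqF nat nat
  | Neg "'a mso"
  | Conj "'a mso" "'a mso"
  | ExF nat "'a mso"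
  | ExS nat "'a mso"

fun sat :: "'a rtree \<Rightarrow> 'a mso \<Rightarrow> (nat \<Rightarrow> nat list) \<Rightarrow> (nat \<Rightarrow> nat list set) \<Rightarrow> bool" where
  "sat t (Lab a x) vf vs = (lab t (vf x) = a)"
| "sat t (Child i x y) vf vs = (1 \<le> i \<and> vf y = vf x @ [i] \<and> vf y \<in> nodes t)"
| "sat t (Elem x X) vf vs = (vf x \<in> vs X)"
| "sat t (EqF x y) vf vs = (vf x = vf y)"
| "sat t (Neg \<phi>) vf vs = (\<not> sat t \<phi> vf vs)"
| "sat t (Conj \<phi> \<psi>) vf vs = (sat t \<phi> vf vs \<and> sat t \<psi> vf vs)"
| "sat t (ExF x \<phi>) vf vs = (\<exists>u \<in> nodes t. sat t \<phi> (vf(x := u)) vs)"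
| "sat t (ExS X \<phi>) vf vs = (\<exists>U \<subseteq> nodes t. sat t \<phi> vf (vs(X := U)))"

fun ffo :: "'a mso \<Rightarrow> nat set" where
  "ffo (Lab a x) = {x}"
| "ffo (Child i x y) = {x, y}"
| "ffo (Elem x X) = {x}"
| "ffo (EqF x y) = {x, y}"
| "ffo (Neg \<phi>) = ffo \<phi>"
| "ffo (Conj \<phi> \<psi>) = ffo \<phi> \<union> ffo \<psi>"
| "ffo (ExF x \<phi>) = ffo \<phi> - {x}"
| "ffo (ExS X \<phi>) = ffo \<phi>"

fun fso :: "'a mso \<Rightarrow> nat set" where
  "fso (Lab a x) = {}"
| "fso (Child i x y) = {}"
| "fso (Elem x X) = {X}"
| "fso (EqF x y) = {}"
| "fso (Neg \<phi>) = fso \<phi>"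
| "fso (Conj \<phi> \<psi>) = fso \<phi> \<union> fso \<psi>"
| "fso (ExF x \<phi>) = fso \<phi>"
| "fso (ExS X \<phi>) = fso \<phi> - {X}"

definition mso_relabeling :: "'d ralph \<Rightarrow> 'a ralph \<Rightarrow> ('d rtree \<Rightarrow> 'a rtree) \<Rightarrow> bool" where
  "mso_relabeling \<Delta> \<Sigma> g \<longleftrightarrow>
     (\<exists>\<phi> :: 'a \<Rightarrow> 'd mso.
        (\<forall>\<sigma> \<in> fst \<Sigma>. ffo (\<phi> \<sigma>) \<subseteq> {0} \<and> fso (\<phi> \<sigma>) = {}) \<and>
        (\<forall>t. wf_tree \<Delta> t \<longrightarrow>
             wf_tree \<Sigma> (g t) \<and> nodes (g t) = nodes t \<and>
             (\<forall>u \<in> nodes t. \<forall>\<sigma> \<in> fst \<Sigma>.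
                 lab (g t) u = \<sigma> \<longleftrightarrow> sat t (\<phi> \<sigma>) (\<lambda>_. u) (\<lambda>_. {}))))"

datatype dir = Up | Dn nat

record ('q, 'm, 'a, 'c) hm =
  hm_states :: "'q set"
  hm_mem :: "'m set"
  hm_top :: 'm
  hm_in :: "'a ralph"
  hm_outa :: "'c ralph"
  hm_init :: 'q
  hm_delta :: "'q \<Rightarrow> 'a \<Rightarrow> 'm \<Rightarrow> ('c + ('q \<times> 'm \<times> dir)) rtree option"

definition is_uTHM :: "('q, 'm, 'a, 'c) hm \<Rightarrow> bool" where
  "is_uTHM A \<longleftrightarrow>
     finite (hm_states A) \<and> finite (hm_mem A) \<and> hm_top A \<in> hm_mem A \<and>
     hm_init A \<in> hm_states A \<and> finite (fst (hm_in A)) \<and> finite (fst (hm_outa A)) \<and>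
     (\<forall>q \<sigma> m r. hm_delta A q \<sigma> m = Some r \<longrightarrow>
        q \<in> hm_states A \<and> \<sigma> \<in> fst (hm_in A) \<and> m \<in> hm_mem A \<and>
        wf_tree_Y (hm_outa A) (hm_states A \<times> hm_mem A \<times> UNIV) r \<and>
        (\<forall>q' m' i. Inr (q', m', Dn i) \<in> set_rtree r \<longrightarrow> 1 \<le> i \<and> i \<le> snd (hm_in A) \<sigma>))"

type_synonym ('q, 'm) conf = "nat list \<times> 'q \<times> (nat list \<Rightarrow> 'm)"

definition init_conf :: "('q, 'm, 'a, 'c) hm \<Rightarrow> ('q, 'm) conf" where
  "init_conf A = ([], hm_init A, (\<lambda>_. hm_top A))"

fun move :: "'a rtree \<Rightarrow> nat list \<Rightarrow> dir \<Rightarrow> nat list option" where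
  "move t u Up = (if u = [] then None else Some (butlast u))"
| "move t u (Dn i) = (if u @ [i] \<in> nodes t then Some (u @ [i]) else None)"

fun step :: "('q, 'm, 'a, 'c) hm \<Rightarrow> 'a rtree \<Rightarrow> ('q, 'm) conf
              \<Rightarrow> ('c + ('q, 'm) conf) rtree option" where
  "step A t (u, q, \<mu>) =
     (if u \<notin> nodes t then None else
      case hm_delta A q (lab t u) (\<mu> u) of
        None \<Rightarrow> None
      | Some r \<Rightarrow>
          (if \<forall>q' m' d. Inr (q', m', d) \<in> set_rtree r \<longrightarrow> move t u d \<noteq> None
           then Some (map_rtree (\<lambda>x. case x of
                          Inl c \<Rightarrow> Inl c
                        | Inr (q', m', d) \<Rightarrow> Inr (the (move t u d), q', \<mu>(u := m'))) r)
           else None))"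

inductive evalT :: "('q, 'm, 'a, 'c) hm \<Rightarrow> 'a rtree \<Rightarrow> ('c + ('q, 'm) conf) rtree \<Rightarrow> 'c rtree \<Rightarrow> bool"
  and evalC :: "('q, 'm, 'a, 'c) hm \<Rightarrow> 'a rtree \<Rightarrow> ('q, 'm) conf \<Rightarrow> 'c rtree \<Rightarrow> bool"
  for A t where
  evalT_out: "list_all2 (evalT A t) ts ss \<Longrightarrow> evalT A t (Node (Inl c) ts) (Node c ss)"
| evalT_conf: "evalC A t C s \<Longrightarrow> evalT A t (Node (Inr C) []) s"
| evalC_step: "step A t C = Some r \<Longrightarrow> evalT A t r s \<Longrightarrow> evalC A t C s"

definition hm_output :: "('q, 'm, 'a, 'c) hm \<Rightarrow> 'a rtree \<Rightarrow> 'c rtree option" where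
  "hm_output A t =
     (if \<exists>s. evalC A t (init_conf A) s then Some (THE s. evalC A t (init_conf A) s) else None)"

definition computes :: "('q, 'm, 'a, 'c) hm \<Rightarrow> ('a rtree \<Rightarrow> 'c rtree option) \<Rightarrow> bool" where
  "computes A f \<longleftrightarrow> (\<forall>t. wf_tree (hm_in A) t \<longrightarrow> hm_output A t = f t)"

definition branch_run :: "('q, 'm, 'a, 'c) hm \<Rightarrow> 'a rtree \<Rightarrow> ('q, 'm) conf list \<Rightarrow> bool" where
  "branch_run A t cs \<longleftrightarrow>
     cs \<noteq> [] \<and> hd cs = init_conf A \<and>
     (\<forall>i. Suc i < length cs \<longrightarrow>
        (\<exists>r. step A t (cs ! i) = Some r \<and> Inr (cs ! Suc i) \<in> set_rtree r))"

definition is_THM :: "('q, 'm, 'a, 'c) hm \<Rightarrow> bool" where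
  "is_THM A \<longleftrightarrow> is_uTHM A \<and>
     (\<exists>N::nat. \<forall>t cs u. wf_tree (hm_in A) t \<longrightarrow> branch_run A t cs \<longrightarrow>
        card {i. i < length cs \<and> fst (cs ! i) = u} \<le> N)"

end

theory Submission
  imports Defs "HOL-Library.Nat_Bijection"
begin


lemma nodes_Node: "nodes (Node a ts) = insert [] (\<Union>i<length ts. (#) (Suc i) ` nodes (ts!i))"
proof -
  have "p \<in> nodes (Node a ts) \<longleftrightarrow> p \<in> insert [] (\<Union>i<length ts. (#) (Suc i) ` nodes (ts!i))" for p
  proof (cases p)
    case Nil then show ?thesis by (simp add: nodes_def)
  next
    case (Cons i v)
    show ?thesis
    proof
      assume "p \<in> nodes (Node a ts)"
      then have "1 \<le> i" "i \<le> length ts" "is_node (ts ! (i - 1)) v" using Cons by (auto simp: nodes_def)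
      then show "p \<in> insert [] (\<Union>i<length ts. (#) (Suc i) ` nodes (ts!i))"
        using Cons by (auto simp: nodes_def intro!: bexI[of _ "i - 1"] image_eqI[of _ _ v])
    qed (use Cons in \<open>auto simp: nodes_def\<close>)
  qed
  then show ?thesis by blast
qed

lemma Nil_in_nodes[simp]: "[] \<in> nodes t" by (simp add: nodes_def)

lemma Cons_in_nodes_Node: "(i # p) \<in> nodes (Node a ts) \<longleftrightarrow> (\<exists>j. i = Suc j \<and> j < length ts \<and> p \<in> nodes (ts!j))"
  by (auto simp: nodes_Node)

lemma finite_nodes: "finite (nodes t)"
proof (induction t)
  case (Node a ts)
  then show ?case by (auto simp: nodes_Node)
qed

lemma lab_Nil[simp]: "lab (Node a ts) [] = a" by (simp add: lab_def)
lemma lab_Cons[simp]: "lab (Node a ts) (Suc i # p) = lab (ts!i) p" by (simp add: lab_def)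

type_synonym mark = "nat set \<times> nat set"

function brun :: "('d \<Rightarrow> mark \<Rightarrow> nat list \<Rightarrow> nat) \<Rightarrow> (nat list \<Rightarrow> mark) \<Rightarrow> 'd rtree \<Rightarrow> nat" where
  "brun tr mk (Node a ts) = tr a (mk []) (map (\<lambda>i. brun tr (\<lambda>p. mk (Suc i # p)) (ts ! i)) [0..<length ts])"
  by pat_completeness auto
termination
  apply (relation "measure (\<lambda>(_,_,t). size t)")
   apply auto
  by (meson le_imp_less_Suc nth_mem size_list_estimation' order.refl)

lemma brun_cong: "(\<And>p. p \<in> nodes t \<Longrightarrow> mk p = mk' p) \<Longrightarrow> brun tr mk t = brun tr mk' t"
proof (induction t arbitrary: mk mk')
  case (Node a ts)
  have "brun tr (\<lambda>p. mk (Suc i # p)) (ts ! i) = brun tr (\<lambda>p. mk' (Suc i # p)) (ts ! i)" if "i < length ts" for i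
  proof (rule Node.IH)
    show "ts ! i \<in> set ts" using that by simp
    fix p assume "p \<in> nodes (ts ! i)"
    then have "Suc i # p \<in> nodes (Node a ts)" using that by (simp add: Cons_in_nodes_Node)
    then show "mk (Suc i # p) = mk' (Suc i # p)" by (rule Node.prems)
  qed
  then have e1: "map (\<lambda>i. brun tr (\<lambda>p. mk (Suc i # p)) (ts ! i)) [0..<length ts] = map (\<lambda>i. brun tr (\<lambda>p. mk' (Suc i # p)) (ts ! i)) [0..<length ts]"
    by (intro map_cong) auto
  have e2: "mk [] = mk' []" using Node.prems by simp
  show ?case by (simp only: brun.simps e1 e2)
qed

lemma ex_nodes_Node: "(\<exists>p\<in>nodes (Node a ts). P p) \<longleftrightarrow> P [] \<or> (\<exists>i<length ts. \<exists>q\<in>nodes (ts!i). P (Suc i # q))"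
  by (auto simp: nodes_Node)

lemma brun_ex:
  assumes "\<And>a m cs. tr a m cs = (if P a m \<or> 1 \<in> set cs then 1 else 0)"
  shows "brun tr mk t = (if \<exists>p\<in>nodes t. P (lab t p) (mk p) then 1 else 0)"
proof (induction t arbitrary: mk)
  case (Node a ts)
  show ?case
    apply (subst brun.simps, subst assms, subst ex_nodes_Node)
    using Node by (auto split: if_splits)
qed

definition chtr :: "nat \<Rightarrow> nat \<Rightarrow> nat \<Rightarrow> 'd \<Rightarrow> mark \<Rightarrow> nat list \<Rightarrow> nat" where
  "chtr i x y a m cs = (if 1 \<in> set cs \<or> (x \<in> fst m \<and> 1 \<le> i \<and> i \<le> length cs \<and> cs!(i-1) = 2) then 1
      else if y \<in> fst m then 2 else 0)"

lemma brun_chtr: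
  "brun (chtr i x y) mk t = (if \<exists>p. p@[i] \<in> nodes t \<and> 1 \<le> i \<and> x \<in> fst (mk p) \<and> y \<in> fst (mk (p@[i])) then 1
     else if y \<in> fst (mk []) then 2 else 0)"
proof (induction t arbitrary: mk)
  case (Node a ts)
  let ?c = "\<lambda>j. brun (chtr i x y) (\<lambda>p. mk (Suc j # p)) (ts ! j)"
  have ex: "(\<exists>p. p@[i] \<in> nodes (Node a ts) \<and> 1 \<le> i \<and> x \<in> fst (mk p) \<and> y \<in> fst (mk (p@[i]))) \<longleftrightarrow>
     (1 \<le> i \<and> i \<le> length ts \<and> x \<in> fst (mk []) \<and> y \<in> fst (mk [i])) \<or>
     (\<exists>j<length ts. \<exists>p. p@[i] \<in> nodes (ts!j) \<and> 1 \<le> i \<and> x \<in> fst (mk (Suc j # p)) \<and> y \<in> fst (mk (Suc j # p @ [i])))"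
    (is "?L \<longleftrightarrow> ?R")
  proof
    assume ?L
    then obtain p where p: "p@[i] \<in> nodes (Node a ts)" "1 \<le> i" "x \<in> fst (mk p)" "y \<in> fst (mk (p@[i]))" by blast
    show ?R
    proof (cases p)
      case Nil then show ?thesis using p by (auto simp: Cons_in_nodes_Node)
    next
      case (Cons k q)
      then show ?thesis using p by (auto simp: Cons_in_nodes_Node)
    qed
  next
    assume ?R then show ?L
    proof
      assume h: "1 \<le> i \<and> i \<le> length ts \<and> x \<in> fst (mk []) \<and> y \<in> fst (mk [i])"
      then have "[]@[i] \<in> nodes (Node a ts)" by (cases i) (auto simp: Cons_in_nodes_Node)
      then show ?L using h by (intro exI[of _ "[]"]) simp
    next
      assume "\<exists>j<length ts. \<exists>p. p@[i] \<in> nodes (ts!j) \<and> 1 \<le> i \<and> x \<in> fst (mk (Suc j # p)) \<and> y \<in> fst (mk (Suc j # p @ [i]))"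
      then obtain j p where "j<length ts" "p@[i] \<in> nodes (ts!j)" "1 \<le> i" "x \<in> fst (mk (Suc j # p))" "y \<in> fst (mk (Suc j # p @ [i]))" by blast
      then show ?L by (intro exI[of _ "Suc j # p"]) (auto simp: Cons_in_nodes_Node)
    qed
  qed
  have IH: "?c j = (if \<exists>p. p@[i] \<in> nodes (ts!j) \<and> 1 \<le> i \<and> x \<in> fst (mk (Suc j # p)) \<and> y \<in> fst (mk (Suc j # p @ [i])) then 1
     else if y \<in> fst (mk [Suc j]) then 2 else 0)" if "j < length ts" for j
    using Node.IH[of "ts!j" "\<lambda>p. mk (Suc j # p)"] that by simp
  have s1: "1 \<in> set (map ?c [0..<length ts]) \<longleftrightarrow> (\<exists>j<length ts. \<exists>p. p@[i] \<in> nodes (ts!j) \<and> 1 \<le> i \<and> x \<in> fst (mk (Suc j # p)) \<and> y \<in> fst (mk (Suc j # p @ [i])))"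
  proof -
    have "1 \<in> set (map ?c [0..<length ts]) \<longleftrightarrow> (\<exists>j<length ts. ?c j = 1)"
      by (simp add: image_iff) (metis atLeastLessThan_iff zero_le)
    moreover have "?c j = 1 \<longleftrightarrow> (\<exists>p. p@[i] \<in> nodes (ts!j) \<and> 1 \<le> i \<and> x \<in> fst (mk (Suc j # p)) \<and> y \<in> fst (mk (Suc j # p @ [i])))"
      if "j < length ts" for j
      by (subst IH[OF that]) simp
    ultimately show ?thesis by (metis (no_types, lifting))
  qed
  have s2: "i \<le> length ts \<Longrightarrow> 1 \<le> i \<Longrightarrow> (map ?c [0..<length ts]) ! (i-1) = 2 \<longleftrightarrow>
     \<not>(\<exists>p. p@[i] \<in> nodes (ts!(i-1)) \<and> 1 \<le> i \<and> x \<in> fst (mk (Suc (i-1) # p)) \<and> y \<in> fst (mk (Suc (i-1) # p @ [i]))) \<and> y \<in> fst (mk [i])"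
  proof -
    assume "1 \<le> i" "i \<le> length ts"
    then obtain k where k: "i = Suc k" "k < length ts" by (cases i) auto
    have "(map ?c [0..<length ts]) ! (i-1) = ?c k" using k by simp
    moreover have "?c k = 2 \<longleftrightarrow> \<not>(\<exists>p. p@[i] \<in> nodes (ts!k) \<and> 1 \<le> i \<and> x \<in> fst (mk (Suc k # p)) \<and> y \<in> fst (mk (Suc k # p @ [i]))) \<and> y \<in> fst (mk [Suc k])"
      by (subst IH[OF k(2)]) auto
    ultimately show ?thesis using k(1) by simp
  qed
  define S where "S \<longleftrightarrow> (\<exists>j<length ts. \<exists>p. p@[i] \<in> nodes (ts!j) \<and> 1 \<le> i \<and> x \<in> fst (mk (Suc j # p)) \<and> y \<in> fst (mk (Suc j # p @ [i])))"
  have main: "(1 \<in> set (map ?c [0..<length ts]) \<or> (x \<in> fst (mk []) \<and> 1 \<le> i \<and> i \<le> length (map ?c [0..<length ts]) \<and> (map ?c [0..<length ts])!(i-1) = 2))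
    \<longleftrightarrow> ((1 \<le> i \<and> i \<le> length ts \<and> x \<in> fst (mk []) \<and> y \<in> fst (mk [i])) \<or> S)"
  proof (cases S)
    case True
    then show ?thesis using s1 unfolding S_def by blast
  next
    case False
    have "(map ?c [0..<length ts])!(i-1) = 2 \<longleftrightarrow> y \<in> fst (mk [i])" if "1 \<le> i" "i \<le> length ts"
    proof -
      have "\<not>(\<exists>p. p@[i] \<in> nodes (ts!(i-1)) \<and> 1 \<le> i \<and> x \<in> fst (mk (Suc (i-1) # p)) \<and> y \<in> fst (mk (Suc (i-1) # p @ [i])))"
        using False that unfolding S_def
        using that False unfolding S_def by (metis One_nat_def Suc_pred diff_less less_eq_Suc_le zero_less_one)
      then show ?thesis using s2[OF that(2,1)] by blast
    qed
    moreover have "\<not> 1 \<in> set (map ?c [0..<length ts])" using s1 False unfolding S_def by simp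
    ultimately show ?thesis using False by auto
  qed
  show ?case
    apply (subst brun.simps, subst chtr_def, subst ex)
    apply (subst main[unfolded S_def])
    by (rule refl)
qed




definition ctr :: "('d \<Rightarrow> mark \<Rightarrow> nat list \<Rightarrow> nat) \<Rightarrow> ('d \<Rightarrow> mark \<Rightarrow> nat list \<Rightarrow> nat) \<Rightarrow> 'd \<Rightarrow> mark \<Rightarrow> nat list \<Rightarrow> nat" where
  "ctr t1 t2 a m cs = prod_encode (t1 a m (map (fst \<circ> prod_decode) cs), t2 a m (map (snd \<circ> prod_decode) cs))"

lemma brun_ctr: "brun (ctr t1 t2) mk t = prod_encode (brun t1 mk t, brun t2 mk t)"
proof (induction t arbitrary: mk)
  case (Node a ts)
  have e: "brun (ctr t1 t2) (\<lambda>p. mk (Suc i # p)) (ts ! i) = prod_encode (brun t1 (\<lambda>p. mk (Suc i # p)) (ts ! i), brun t2 (\<lambda>p. mk (Suc i # p)) (ts ! i))"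
    if "i < length ts" for i using that Node.IH by simp
  have m1: "map (fst \<circ> prod_decode) (map (\<lambda>i. brun (ctr t1 t2) (\<lambda>p. mk (Suc i # p)) (ts ! i)) [0..<length ts])
     = map (\<lambda>i. brun t1 (\<lambda>p. mk (Suc i # p)) (ts ! i)) [0..<length ts]"
    by (simp add: e)
  have m2: "map (snd \<circ> prod_decode) (map (\<lambda>i. brun (ctr t1 t2) (\<lambda>p. mk (Suc i # p)) (ts ! i)) [0..<length ts])
     = map (\<lambda>i. brun t2 (\<lambda>p. mk (Suc i # p)) (ts ! i)) [0..<length ts]"
    by (simp add: e)
  show ?case by (subst brun.simps, subst ctr_def, simp only: m1 m2 brun.simps)
qed

lemma brun_in: "(\<And>a m cs. tr a m cs \<in> Q) \<Longrightarrow> brun tr mk t \<in> Q"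
  by (cases t) simp

definition ptr :: "('d \<Rightarrow> mark \<Rightarrow> nat list \<Rightarrow> nat) \<Rightarrow> (bool \<Rightarrow> mark \<Rightarrow> mark) \<Rightarrow> 'd \<Rightarrow> mark \<Rightarrow> nat list \<Rightarrow> nat" where
  "ptr tr up a m cs = set_encode {tr a (up b m) xs | b xs. list_all2 (\<lambda>x c. x \<in> set_decode c) xs cs}"

lemma brun_ptr:
  assumes Q: "finite Q" "\<And>a m cs. tr a m cs \<in> Q"
  shows "brun (ptr tr up) mk t = set_encode {brun tr (\<lambda>p. up (B p) (mk p)) t | B. True}"
proof (induction t arbitrary: mk)
  case (Node a ts)
  define S where "S i = {brun tr (\<lambda>p. up (B p) (mk (Suc i # p))) (ts!i) | B. True}" for i
  have fin: "finite (S i)" for i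
    by (rule finite_subset[OF _ Q(1)]) (auto simp: S_def intro: brun_in Q(2))
  have IH: "brun (ptr tr up) (\<lambda>p. mk (Suc i # p)) (ts ! i) = set_encode (S i)" if "i < length ts" for i
    using Node.IH[OF nth_mem[OF that]] unfolding S_def by blast
  have L: "{tr a (up b (mk [])) xs | b xs. list_all2 (\<lambda>x c. x \<in> set_decode c) xs (map (\<lambda>i. brun (ptr tr up) (\<lambda>p. mk (Suc i # p)) (ts ! i)) [0..<length ts])}
      = {tr a (up b (mk [])) xs | b xs. length xs = length ts \<and> (\<forall>i<length ts. xs ! i \<in> S i)}"
  proof -
    have "list_all2 (\<lambda>x c. x \<in> set_decode c) xs (map (\<lambda>i. brun (ptr tr up) (\<lambda>p. mk (Suc i # p)) (ts ! i)) [0..<length ts])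
      \<longleftrightarrow> length xs = length ts \<and> (\<forall>i<length ts. xs ! i \<in> S i)" for xs
      by (auto simp: list_all2_conv_all_nth IH fin)
    then show ?thesis by simp
  qed
  have R: "{brun tr (\<lambda>p. up (B p) (mk p)) (Node a ts) | B. True}
      = {tr a (up b (mk [])) xs | b xs. length xs = length ts \<and> (\<forall>i<length ts. xs ! i \<in> S i)}"
  proof (intro equalityI subsetI)
    fix z assume "z \<in> {brun tr (\<lambda>p. up (B p) (mk p)) (Node a ts) | B. True}"
    then obtain B where z: "z = brun tr (\<lambda>p. up (B p) (mk p)) (Node a ts)" by blast
    show "z \<in> {tr a (up b (mk [])) xs | b xs. length xs = length ts \<and> (\<forall>i<length ts. xs ! i \<in> S i)}"
      unfolding z S_def
      by (rule CollectI, rule exI[of _ "B []"], rule exI[of _ "map (\<lambda>i. brun tr (\<lambda>p. up (B (Suc i # p)) (mk (Suc i # p))) (ts ! i)) [0..<length ts]"]) auto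
  next
    fix z assume "z \<in> {tr a (up b (mk [])) xs | b xs. length xs = length ts \<and> (\<forall>i<length ts. xs ! i \<in> S i)}"
    then obtain b xs where z: "z = tr a (up b (mk [])) xs" and xs: "length xs = length ts" "\<forall>i<length ts. xs ! i \<in> S i" by blast
    have "\<forall>i. \<exists>Bi. i < length ts \<longrightarrow> xs ! i = brun tr (\<lambda>p. up (Bi p) (mk (Suc i # p))) (ts!i)"
      using xs(2) unfolding S_def by blast
    then obtain Bf where Bf: "\<And>i. i < length ts \<Longrightarrow> xs ! i = brun tr (\<lambda>p. up (Bf i p) (mk (Suc i # p))) (ts!i)"
      by metis
    define B where "B p = (case p of [] \<Rightarrow> b | (0 # q) \<Rightarrow> False | (Suc i # q) \<Rightarrow> Bf i q)" for p
    have "map (\<lambda>i. brun tr (\<lambda>p. up (B (Suc i # p)) (mk (Suc i # p))) (ts ! i)) [0..<length ts] = xs"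
      by (rule nth_equalityI) (auto simp: xs(1) Bf B_def)
    then have "z = brun tr (\<lambda>p. up (B p) (mk p)) (Node a ts)"
      unfolding z by (simp add: B_def)
    then show "z \<in> {brun tr (\<lambda>p. up (B p) (mk p)) (Node a ts) | B. True}" by blast
  qed
  show ?case
    by (subst brun.simps, subst ptr_def, subst L, subst R) (rule refl)
qed

definition str :: "nat \<Rightarrow> 'd \<Rightarrow> mark \<Rightarrow> nat list \<Rightarrow> nat" where
  "str x a m cs = min 2 ((if x \<in> fst m then 1 else 0) + sum_list cs)"

lemma card_nodes_Node:
  "card {p \<in> nodes (Node a ts). P p} = (if P [] then 1 else 0) + (\<Sum>i<length ts. card {q \<in> nodes (ts!i). P (Suc i # q)})"
proof -
  have e: "{p \<in> nodes (Node a ts). P p} = (if P [] then {[]} else {}) \<union> (\<Union>i\<in>{..<length ts}. (#) (Suc i) ` {q \<in> nodes (ts!i). P (Suc i # q)})"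
    by (auto simp: nodes_Node)
  have fin: "finite {q \<in> nodes (ts!i). P (Suc i # q)}" for i using finite_nodes[of "ts!i"] by simp
  have c2: "card (\<Union>i\<in>{..<length ts}. (#) (Suc i) ` {q \<in> nodes (ts!i). P (Suc i # q)}) = (\<Sum>i<length ts. card {q \<in> nodes (ts!i). P (Suc i # q)})"
    by (subst card_UN_disjoint) (auto simp: fin card_image)
  show ?thesis
    apply (subst e)
    apply (subst card_Un_disjoint)
    using fin c2 by auto
qed

lemma min2_sum: "min 2 (b + sum_list (map (min 2) xs)) = min 2 (b + sum_list (xs::nat list))"
  by (induction xs arbitrary: b) (simp_all add: min_def add.assoc[symmetric])

lemma brun_str: "brun (str x) mk t = min 2 (card {p \<in> nodes t. x \<in> fst (mk p)})"
proof (induction t arbitrary: mk)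
  case (Node a ts)
  have e: "brun (str x) (\<lambda>p. mk (Suc i # p)) (ts ! i) = min 2 (card {q \<in> nodes (ts!i). x \<in> fst (mk (Suc i # q))})"
    if "i < length ts" for i using Node.IH[OF nth_mem[OF that]] by blast
  have em: "map (\<lambda>i. brun (str x) (\<lambda>p. mk (Suc i # p)) (ts ! i)) [0..<length ts]
      = map (min 2) (map (\<lambda>i. card {q \<in> nodes (ts!i). x \<in> fst (mk (Suc i # q))}) [0..<length ts])"
    by (simp add: e)
  show ?case
    apply (subst brun.simps, subst str_def)
    apply (subst em)
    apply (subst min2_sum)
    apply (subst card_nodes_Node)
    apply (simp add: interv_sum_list_conv_sum_set_nat lessThan_atLeast0)
    done
qed

definition mkv :: "(nat \<Rightarrow> nat list) \<Rightarrow> (nat \<Rightarrow> nat list set) \<Rightarrow> nat list \<Rightarrow> mark" where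
  "mkv vf vs p = ({x. vf x = p}, {X. p \<in> vs X})"

definition autom :: "'d mso \<Rightarrow> bool" where
  "autom \<phi> \<longleftrightarrow> (\<exists>tr acc (Q::nat set). finite Q \<and> (\<forall>a m cs. tr a m cs \<in> Q) \<and>
     (\<forall>(t::'d rtree) vf vs. (\<forall>x. vf x \<in> nodes t) \<longrightarrow> (sat t \<phi> vf vs \<longleftrightarrow> acc (brun tr (mkv vf vs) t))))"

lemma autom_ex:
  assumes "\<And>t vf vs. (\<forall>x. vf x \<in> nodes t) \<Longrightarrow> sat t \<phi> vf vs \<longleftrightarrow> (\<exists>p\<in>nodes t. P (lab t p) (mkv vf vs p))"
  shows "autom \<phi>"
  unfolding autom_def
proof (intro exI conjI allI impI)
  let ?tr = "\<lambda>a m cs. if P a m \<or> 1 \<in> set cs then 1 else (0::nat)"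
  show "finite {0, 1::nat}" by simp
  show "?tr a m cs \<in> {0,1}" for a m cs by simp
  fix t :: "'a rtree" and vf :: "nat \<Rightarrow> nat list" and vs :: "nat \<Rightarrow> nat list set" assume "\<forall>x. vf x \<in> nodes t"
  then show "sat t \<phi> vf vs \<longleftrightarrow> (\<lambda>s. s = 1) (brun ?tr (mkv vf vs) t)"
    using assms brun_ex[of ?tr P "mkv vf vs" t] by simp
qed

definition updF :: "nat \<Rightarrow> bool \<Rightarrow> mark \<Rightarrow> mark" where
  "updF x b m = (if b then insert x (fst m) else fst m - {x}, snd m)"
definition updS :: "nat \<Rightarrow> bool \<Rightarrow> mark \<Rightarrow> mark" where
  "updS X b m = (fst m, if b then insert X (snd m) else snd m - {X})"

lemma mkv_updF: "mkv (vf(x:=u)) vs p = updF x (p = u) (mkv vf vs p)"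
  by (auto simp: mkv_def updF_def)
lemma mkv_updS: "mkv vf (vs(X:=U)) p = updS X (p \<in> U) (mkv vf vs p)"
  by (auto simp: mkv_def updS_def)

lemma ptr_in:
  assumes "finite Q" "\<And>a m cs. tr a m cs \<in> Q"
  shows "ptr tr up a m cs \<in> set_encode ` Pow Q"
  unfolding ptr_def by (rule imageI) (use assms(2) in blast)

lemma mso_autom: "autom \<phi>"
proof (induction \<phi>)
  case (Lab b x)
  show ?case
    by (rule autom_ex[where P="\<lambda>a m. x \<in> fst m \<and> a = b"]) (auto simp: mkv_def)
next
  case (Child i x y)
  show ?case unfolding autom_def
  proof (intro exI conjI allI impI)
    show "finite {0,1,2::nat}" by simp
    show "chtr i x y a m cs \<in> {0,1,2}" for a m cs by (simp add: chtr_def)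
    fix t :: "'a rtree" and vf :: "nat \<Rightarrow> nat list" and vs :: "nat \<Rightarrow> nat list set"
    show "sat t (Child i x y) vf vs \<longleftrightarrow> (\<lambda>s. s = 1) (brun (chtr i x y) (mkv vf vs) t)"
      by (subst brun_chtr) (auto simp: mkv_def)
  qed
next
  case (Elem x X)
  show ?case
    by (rule autom_ex[where P="\<lambda>a m. x \<in> fst m \<and> X \<in> snd m"]) (auto simp: mkv_def)
next
  case (EqF x y)
  show ?case
    by (rule autom_ex[where P="\<lambda>a m. x \<in> fst m \<and> y \<in> fst m"]) (auto simp: mkv_def)
next
  case (Neg \<phi>)
  then obtain tr acc Q where h: "finite Q" "\<forall>a m cs. tr a m cs \<in> Q"
    "\<forall>(t::'a rtree) vf vs. (\<forall>x. vf x \<in> nodes t) \<longrightarrow> (sat t \<phi> vf vs \<longleftrightarrow> acc (brun tr (mkv vf vs) t))"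
    unfolding autom_def by blast
  show ?case unfolding autom_def
    by (rule exI[of _ tr], rule exI[of _ "\<lambda>s. \<not> acc s"], rule exI[of _ Q]) (use h in auto)
next
  case (Conj \<phi> \<psi>)
  obtain tr1 acc1 Q1 where h1: "finite Q1" "\<forall>a m cs. tr1 a m cs \<in> Q1"
    "\<forall>(t::'a rtree) vf vs. (\<forall>x. vf x \<in> nodes t) \<longrightarrow> (sat t \<phi> vf vs \<longleftrightarrow> acc1 (brun tr1 (mkv vf vs) t))"
    using Conj.IH(1) unfolding autom_def by blast
  obtain tr2 acc2 Q2 where h2: "finite Q2" "\<forall>a m cs. tr2 a m cs \<in> Q2"
    "\<forall>(t::'a rtree) vf vs. (\<forall>x. vf x \<in> nodes t) \<longrightarrow> (sat t \<psi> vf vs \<longleftrightarrow> acc2 (brun tr2 (mkv vf vs) t))"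
    using Conj.IH(2) unfolding autom_def by blast
  show ?case unfolding autom_def
  proof (intro exI conjI allI impI)
    show "finite (prod_encode ` (Q1 \<times> Q2))" using h1 h2 by simp
    show "ctr tr1 tr2 a m cs \<in> prod_encode ` (Q1 \<times> Q2)" for a m cs unfolding ctr_def by (rule imageI) (simp add: h1(2) h2(2))
    fix t :: "'a rtree" and vf :: "nat \<Rightarrow> nat list" and vs :: "nat \<Rightarrow> nat list set" assume "\<forall>x. vf x \<in> nodes t"
    then show "sat t (Conj \<phi> \<psi>) vf vs \<longleftrightarrow> (\<lambda>s. acc1 (fst (prod_decode s)) \<and> acc2 (snd (prod_decode s))) (brun (ctr tr1 tr2) (mkv vf vs) t)"
      using h1 h2 by (simp add: brun_ctr)
  qed
next
  case (ExF x \<phi>)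
  obtain tr acc Q where h: "finite Q" "\<forall>a m cs. tr a m cs \<in> Q"
    "\<forall>(t::'a rtree) vf vs. (\<forall>x. vf x \<in> nodes t) \<longrightarrow> (sat t \<phi> vf vs \<longleftrightarrow> acc (brun tr (mkv vf vs) t))"
    using ExF.IH unfolding autom_def by blast
  define Q2 where "Q2 = prod_encode ` (Q \<times> {0,1,2})"
  have fQ2: "finite Q2" using h(1) by (simp add: Q2_def)
  have s2: "str x a m cs' \<in> {0,1,2}" for a m cs'
  proof -
    have "str x a m cs' \<le> 2" by (simp add: str_def)
    then show ?thesis by auto
  qed
  have inQ2: "ctr tr (str x) a m cs \<in> Q2" for a m cs
    unfolding Q2_def ctr_def by (rule imageI, rule SigmaI, rule h(2)[rule_format], rule s2)
  show ?case unfolding autom_def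
  proof (intro exI conjI allI impI)
    show "finite (set_encode ` Pow Q2)" using fQ2 by simp
    show "ptr (ctr tr (str x)) (updF x) a m cs \<in> set_encode ` Pow Q2" for a m cs
      by (rule ptr_in[OF fQ2 inQ2])
    fix t :: "'a rtree" and vf :: "nat \<Rightarrow> nat list" and vs :: "nat \<Rightarrow> nat list set" assume vf: "\<forall>x. vf x \<in> nodes t"
    let ?S = "{brun (ctr tr (str x)) (\<lambda>p. updF x (B p) (mkv vf vs p)) t | B. True}"
    have fS: "finite ?S" by (rule finite_subset[OF _ fQ2]) (auto intro: brun_in inQ2)
    have br: "brun (ptr (ctr tr (str x)) (updF x)) (mkv vf vs) t = set_encode ?S"
      by (rule brun_ptr[OF fQ2 inQ2])
    have xm: "x \<in> fst (updF x b m) \<longleftrightarrow> b" for b m by (simp add: updF_def)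
    have "sat t (ExF x \<phi>) vf vs \<longleftrightarrow> (\<exists>u\<in>nodes t. acc (brun tr (\<lambda>p. updF x (p = u) (mkv vf vs p)) t))"
      using h(3) vf by (simp add: mkv_updF[symmetric])
    also have "\<dots> \<longleftrightarrow> (\<exists>B. acc (brun tr (\<lambda>p. updF x (B p) (mkv vf vs p)) t) \<and> min 2 (card {p \<in> nodes t. B p}) = 1)"
    proof
      assume "\<exists>u\<in>nodes t. acc (brun tr (\<lambda>p. updF x (p = u) (mkv vf vs p)) t)"
      then obtain u where u: "u \<in> nodes t" "acc (brun tr (\<lambda>p. updF x (p = u) (mkv vf vs p)) t)" by blast
      have "{p \<in> nodes t. p = u} = {u}" using u by auto
      then show "\<exists>B. acc (brun tr (\<lambda>p. updF x (B p) (mkv vf vs p)) t) \<and> min 2 (card {p \<in> nodes t. B p}) = 1"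
        using u by (intro exI[of _ "\<lambda>p. p = u"]) simp
    next
      assume "\<exists>B. acc (brun tr (\<lambda>p. updF x (B p) (mkv vf vs p)) t) \<and> min 2 (card {p \<in> nodes t. B p}) = 1"
      then obtain B where B: "acc (brun tr (\<lambda>p. updF x (B p) (mkv vf vs p)) t)" and B2: "min 2 (card {p \<in> nodes t. B p}) = 1"
        by blast
      have mm: "min (2::nat) c = 1 \<Longrightarrow> c = 1" for c by (simp add: min_def split: if_splits)
      have "card {p \<in> nodes t. B p} = 1" using mm[OF B2] .
      then obtain u where u: "{p \<in> nodes t. B p} = {u}" by (auto simp: card_Suc_eq)
      then have "u \<in> nodes t" by auto
      moreover have "brun tr (\<lambda>p. updF x (B p) (mkv vf vs p)) t = brun tr (\<lambda>p. updF x (p = u) (mkv vf vs p)) t"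
      proof (rule brun_cong)
        fix p assume "p \<in> nodes t"
        then have "B p \<longleftrightarrow> p = u" using u by blast
        then show "updF x (B p) (mkv vf vs p) = updF x (p = u) (mkv vf vs p)" by simp
      qed
      ultimately show "\<exists>u\<in>nodes t. acc (brun tr (\<lambda>p. updF x (p = u) (mkv vf vs p)) t)" using B by auto
    qed
    also have "\<dots> \<longleftrightarrow> (\<exists>c\<in>?S. acc (fst (prod_decode c)) \<and> snd (prod_decode c) = 1)"
    proof -
      have e: "brun (ctr tr (str x)) (\<lambda>p. updF x (B p) (mkv vf vs p)) t = prod_encode (brun tr (\<lambda>p. updF x (B p) (mkv vf vs p)) t, min 2 (card {p \<in> nodes t. B p}))" for B
        by (simp add: brun_ctr brun_str xm)
      have "(\<exists>c\<in>?S. acc (fst (prod_decode c)) \<and> snd (prod_decode c) = 1) \<longleftrightarrow>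
        (\<exists>B. acc (fst (prod_decode (brun (ctr tr (str x)) (\<lambda>p. updF x (B p) (mkv vf vs p)) t))) \<and> snd (prod_decode (brun (ctr tr (str x)) (\<lambda>p. updF x (B p) (mkv vf vs p)) t)) = 1)"
        by blast
      then show ?thesis unfolding e by simp
    qed
    finally show "sat t (ExF x \<phi>) vf vs \<longleftrightarrow> (\<lambda>s. \<exists>c\<in>set_decode s. acc (fst (prod_decode c)) \<and> snd (prod_decode c) = 1)
        (brun (ptr (ctr tr (str x)) (updF x)) (mkv vf vs) t)"
      by (simp only: br set_encode_inverse[OF fS])
  qed
next
  case (ExS X \<phi>)
  obtain tr acc Q where h: "finite Q" "\<forall>a m cs. tr a m cs \<in> Q"
    "\<forall>(t::'a rtree) vf vs. (\<forall>x. vf x \<in> nodes t) \<longrightarrow> (sat t \<phi> vf vs \<longleftrightarrow> acc (brun tr (mkv vf vs) t))"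
    using ExS.IH unfolding autom_def by blast
  have inQ: "tr a m cs \<in> Q" for a m cs by (rule h(2)[rule_format])
  show ?case unfolding autom_def
  proof (intro exI conjI allI impI)
    show "finite (set_encode ` Pow Q)" using h(1) by simp
    show "ptr tr (updS X) a m cs \<in> set_encode ` Pow Q" for a m cs
      by (rule ptr_in[OF h(1) inQ])
    fix t :: "'a rtree" and vf :: "nat \<Rightarrow> nat list" and vs :: "nat \<Rightarrow> nat list set" assume vf: "\<forall>x. vf x \<in> nodes t"
    let ?S = "{brun tr (\<lambda>p. updS X (B p) (mkv vf vs p)) t | B. True}"
    have fS: "finite ?S" by (rule finite_subset[OF _ h(1)]) (auto intro: brun_in inQ)
    have br: "brun (ptr tr (updS X)) (mkv vf vs) t = set_encode ?S"
      by (rule brun_ptr[OF h(1) inQ])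
    have "sat t (ExS X \<phi>) vf vs \<longleftrightarrow> (\<exists>U\<subseteq>nodes t. acc (brun tr (\<lambda>p. updS X (p \<in> U) (mkv vf vs p)) t))"
      using h(3) vf by (simp add: mkv_updS[symmetric])
    also have "\<dots> \<longleftrightarrow> (\<exists>B. acc (brun tr (\<lambda>p. updS X (B p) (mkv vf vs p)) t))"
    proof
      assume "\<exists>U\<subseteq>nodes t. acc (brun tr (\<lambda>p. updS X (p \<in> U) (mkv vf vs p)) t)"
      then obtain U where "acc (brun tr (\<lambda>p. updS X (p \<in> U) (mkv vf vs p)) t)" by blast
      then show "\<exists>B. acc (brun tr (\<lambda>p. updS X (B p) (mkv vf vs p)) t)" by (intro exI[of _ "\<lambda>p. p \<in> U"])
    next
      assume "\<exists>B. acc (brun tr (\<lambda>p. updS X (B p) (mkv vf vs p)) t)"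
      then obtain B where B: "acc (brun tr (\<lambda>p. updS X (B p) (mkv vf vs p)) t)" by blast
      have "brun tr (\<lambda>p. updS X (B p) (mkv vf vs p)) t = brun tr (\<lambda>p. updS X (p \<in> {q \<in> nodes t. B q}) (mkv vf vs p)) t"
        by (rule brun_cong) auto
      then show "\<exists>U\<subseteq>nodes t. acc (brun tr (\<lambda>p. updS X (p \<in> U) (mkv vf vs p)) t)"
        using B by (intro exI[of _ "{q \<in> nodes t. B q}"]) auto
    qed
    also have "\<dots> \<longleftrightarrow> (\<exists>c\<in>?S. acc c)" by auto
    finally show "sat t (ExS X \<phi>) vf vs \<longleftrightarrow> (\<lambda>s. \<exists>c\<in>set_decode s. acc c) (brun (ptr tr (updS X)) (mkv vf vs) t)"
      by (simp only: br set_encode_inverse[OF fS])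
  qed
qed




definition nch :: "'a rtree \<Rightarrow> nat list \<Rightarrow> nat" where
  "nch t u = length (children (subt t u))"

lemma subt_append: "subt t (u @ v) = subt (subt t u) v"
proof (induction u arbitrary: t)
  case Nil then show ?case by simp
next
  case (Cons i u) then show ?case by (cases t) simp
qed

lemma subt_Cons[simp]: "subt (Node a ts) (Suc i # p) = subt (ts ! i) p" by simp

lemma nodes_child: "u \<in> nodes t \<Longrightarrow> u @ [j] \<in> nodes t \<longleftrightarrow> 1 \<le> j \<and> j \<le> nch t u"
proof (induction u arbitrary: t)
  case Nil then show ?case by (cases t) (auto simp: nch_def nodes_def)
next
  case (Cons i u)
  then obtain a ts k where t: "t = Node a ts" "i = Suc k" "k < length ts" "u \<in> nodes (ts!k)"
    by (cases t) (auto simp: Cons_in_nodes_Node)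
  then show ?case using Cons.IH[of "ts!k"] by (auto simp: Cons_in_nodes_Node nch_def)
qed

lemma nodes_prefix: "u @ v \<in> nodes t \<Longrightarrow> u \<in> nodes t"
proof (induction u arbitrary: t)
  case Nil then show ?case by simp
next
  case (Cons i u) then show ?case by (cases t) (auto simp: Cons_in_nodes_Node)
qed

lemma nodes_subt: "u \<in> nodes t \<Longrightarrow> (u @ v \<in> nodes t \<longleftrightarrow> v \<in> nodes (subt t u))"
proof (induction u arbitrary: t)
  case Nil then show ?case by simp
next
  case (Cons i u) then show ?case by (cases t) (auto simp: Cons_in_nodes_Node)
qed

lemma lab_subt: "lab t (u @ v) = lab (subt t u) v"
  by (simp add: lab_def subt_append)

lemma wf_subt: "wf_tree A t \<Longrightarrow> u \<in> nodes t \<Longrightarrow> wf_tree A (subt t u)"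
proof (induction u arbitrary: t)
  case Nil then show ?case by simp
next
  case (Cons i u)
  then obtain a ts k where t: "t = Node a ts" "i = Suc k" "k < length ts" "u \<in> nodes (ts!k)"
    by (cases t) (auto simp: Cons_in_nodes_Node)
  then have "wf_tree A (ts!k)" using Cons.prems(1) by (simp add: list_all_length)
  then show ?case using Cons.IH t by simp
qed

lemma wf_lab: "wf_tree A t \<Longrightarrow> u \<in> nodes t \<Longrightarrow> lab t u \<in> fst A"
  using wf_subt[of A t u] by (cases "subt t u") (simp add: lab_def)

lemma wf_nch: "wf_tree A t \<Longrightarrow> u \<in> nodes t \<Longrightarrow> nch t u = snd A (lab t u)"
  using wf_subt[of A t u] by (cases "subt t u") (simp add: lab_def nch_def)

lemma nodes_eq_nch:
  assumes "nodes t = nodes t'" "u \<in> nodes t"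
  shows "nch t u = nch t' u"
proof -
  have u': "u \<in> nodes t'" using assms by simp
  have "\<And>j. (1 \<le> j \<and> j \<le> nch t u) \<longleftrightarrow> (1 \<le> j \<and> j \<le> nch t' u)"
    using nodes_child[OF assms(2)] nodes_child[OF u'] assms(1) by blast
  from this[of "nch t u"] this[of "nch t' u"] show ?thesis by (cases "nch t u"; cases "nch t' u") auto
qed

lemma subt_child: "subt t (u @ [Suc j]) = children (subt t u) ! j"
  by (cases "subt t u") (simp add: subt_append)

section \<open>Product automaton and relabeling automaton\<close>

definition mk0 :: "nat list \<Rightarrow> mark" where "mk0 p = ({}, {})"

definition prtr :: "(nat \<Rightarrow> 'd \<Rightarrow> mark \<Rightarrow> nat list \<Rightarrow> nat) \<Rightarrow> nat \<Rightarrow> 'd \<Rightarrow> mark \<Rightarrow> nat list \<Rightarrow> nat" where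
  "prtr TR K a m cs = list_encode (map (\<lambda>k. TR k a m (map (\<lambda>c. list_decode c ! k) cs)) [0..<K])"

lemma brun_prtr: "brun (prtr TR K) mk t = list_encode (map (\<lambda>k. brun (TR k) mk t) [0..<K])"
proof (induction t arbitrary: mk)
  case (Node a ts)
  have e: "brun (prtr TR K) (\<lambda>p. mk (Suc i # p)) (ts ! i) = list_encode (map (\<lambda>k. brun (TR k) (\<lambda>p. mk (Suc i # p)) (ts ! i)) [0..<K])"
    if "i < length ts" for i using Node.IH[OF nth_mem[OF that]] by blast
  have m: "map (\<lambda>c. list_decode c ! k) (map (\<lambda>i. brun (prtr TR K) (\<lambda>p. mk (Suc i # p)) (ts ! i)) [0..<length ts])
     = map (\<lambda>i. brun (TR k) (\<lambda>p. mk (Suc i # p)) (ts ! i)) [0..<length ts]" if "k < K" for k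
    using that by (simp add: e)
  have "map (\<lambda>k. TR k a (mk []) (map (\<lambda>c. list_decode c ! k) (map (\<lambda>i. brun (prtr TR K) (\<lambda>p. mk (Suc i # p)) (ts ! i)) [0..<length ts]))) [0..<K]
     = map (\<lambda>k. brun (TR k) mk (Node a ts)) [0..<K]"
  proof (rule map_cong[OF refl])
    fix k assume "k \<in> set [0..<K]"
    then have "k < K" by simp
    then show "TR k a (mk []) (map (\<lambda>c. list_decode c ! k) (map (\<lambda>i. brun (prtr TR K) (\<lambda>p. mk (Suc i # p)) (ts ! i)) [0..<length ts]))
      = brun (TR k) mk (Node a ts)" by (simp only: m brun.simps)
  qed
  then show ?case by (subst brun.simps[of "prtr TR K"], subst prtr_def[of TR K]) (simp only:)
qed

lemma relab_aut:
  assumes fin: "finite (fst \<Sigma>)" and rel: "mso_relabeling \<Delta> \<Sigma> g"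
  shows "\<exists>tr (N::nat) ot. (\<forall>a m cs. tr a m cs < N) \<and>
     (\<forall>t. wf_tree \<Delta> t \<longrightarrow> (\<forall>u\<in>nodes t. lab (g t) u = ot (brun tr (\<lambda>p. if p = u then (UNIV, {}) else ({}, {})) t)))"
proof -
  obtain \<phi> where \<phi>: "\<forall>\<sigma> \<in> fst \<Sigma>. ffo (\<phi> \<sigma>) \<subseteq> {0} \<and> fso (\<phi> \<sigma>) = {}"
    "\<forall>t. wf_tree \<Delta> t \<longrightarrow> wf_tree \<Sigma> (g t) \<and> nodes (g t) = nodes t \<and>
         (\<forall>u \<in> nodes t. \<forall>\<sigma> \<in> fst \<Sigma>. lab (g t) u = \<sigma> \<longleftrightarrow> sat t (\<phi> \<sigma>) (\<lambda>_. u) (\<lambda>_. {}))"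
    using rel unfolding mso_relabeling_def by blast
  have H: "\<forall>\<sigma>. \<exists>tr acc (Q::nat set). finite Q \<and> (\<forall>a m cs. tr a m cs \<in> Q) \<and>
     (\<forall>t vf vs. (\<forall>x. vf x \<in> nodes t) \<longrightarrow> (sat t (\<phi> \<sigma>) vf vs \<longleftrightarrow> acc (brun tr (mkv vf vs) t)))"
    using mso_autom[unfolded autom_def] by (rule allI)
  from choice[OF H] obtain TRf where H1: "\<forall>\<sigma>. \<exists>acc (Q::nat set). finite Q \<and> (\<forall>a m cs. TRf \<sigma> a m cs \<in> Q) \<and>
     (\<forall>t vf vs. (\<forall>x. vf x \<in> nodes t) \<longrightarrow> (sat t (\<phi> \<sigma>) vf vs \<longleftrightarrow> acc (brun (TRf \<sigma>) (mkv vf vs) t)))" ..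
  from choice[OF H1] obtain ACCf where H2: "\<forall>\<sigma>. \<exists>(Q::nat set). finite Q \<and> (\<forall>a m cs. TRf \<sigma> a m cs \<in> Q) \<and>
     (\<forall>t vf vs. (\<forall>x. vf x \<in> nodes t) \<longrightarrow> (sat t (\<phi> \<sigma>) vf vs \<longleftrightarrow> ACCf \<sigma> (brun (TRf \<sigma>) (mkv vf vs) t)))" ..
  from choice[OF H2] obtain QQ where H3: "\<forall>\<sigma>. finite (QQ \<sigma>) \<and> (\<forall>a m cs. TRf \<sigma> a m cs \<in> QQ \<sigma>) \<and>
     (\<forall>t vf vs. (\<forall>x. vf x \<in> nodes t) \<longrightarrow> (sat t (\<phi> \<sigma>) vf vs \<longleftrightarrow> ACCf \<sigma> (brun (TRf \<sigma>) (mkv vf vs) t)))" ..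
  have A: "\<And>\<sigma>. finite (QQ \<sigma>)" "\<And>\<sigma> a m cs. TRf \<sigma> a m cs \<in> QQ \<sigma>"
    "\<And>\<sigma> t vf vs. (\<forall>x. vf x \<in> nodes t) \<Longrightarrow> (sat t (\<phi> \<sigma>) vf vs \<longleftrightarrow> ACCf \<sigma> (brun (TRf \<sigma>) (mkv vf vs) t))"
    using H3 by blast+
  obtain L where L: "set L = fst \<Sigma>" "distinct L" using finite_distinct_list[OF fin] by blast
  define K where "K = length L"
  define TR where "TR k = TRf (L ! k)" for k
  define tr where "tr = prtr TR K"
  define QS where "QS = list_encode ` {xs. set xs \<subseteq> (\<Union>k<K. QQ (L!k)) \<and> length xs = K}"
  have fQS: "finite QS" unfolding QS_def using A(1)
    by (intro finite_imageI finite_lists_length_eq) auto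
  have trQS: "tr a m cs \<in> QS" for a m cs
    unfolding tr_def prtr_def QS_def TR_def proof (rule imageI, safe)
    fix x assume "x \<in> set (map (\<lambda>k. TRf (L ! k) a m (map (\<lambda>c. list_decode c ! k) cs)) [0..<K])"
    then obtain k where "k < K" "x = TRf (L ! k) a m (map (\<lambda>c. list_decode c ! k) cs)" by auto
    then show "x \<in> (\<Union>k<K. QQ (L!k))" using A(2) by blast
  qed simp
  define N where "N = Suc (Max QS)"
  have trN: "tr a m cs < N" for a m cs
    using Max_ge[OF fQS trQS[of a m cs]] unfolding N_def by simp
  define ot where "ot s = (SOME \<sigma>. \<exists>k<K. \<sigma> = L!k \<and> ACCf (L!k) (list_decode s ! k))" for s
  show ?thesis
  proof (intro exI[of _ tr] exI[of _ N] exI[of _ ot] conjI allI impI ballI)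
    show "tr a m cs < N" for a m cs by (rule trN)
    fix t u assume t: "wf_tree \<Delta> t" and u: "u \<in> nodes t"
    let ?mk = "\<lambda>p. if p = u then (UNIV, {}) else ({}::nat set, {}::nat set)"
    have mk: "?mk = mkv (\<lambda>_. u) (\<lambda>_. {})" by (rule ext) (simp add: mkv_def)
    have g: "wf_tree \<Sigma> (g t)" "nodes (g t) = nodes t" using \<phi>(2) t by blast+
    have \<phi>t: "\<And>u \<sigma>. u \<in> nodes t \<Longrightarrow> \<sigma> \<in> fst \<Sigma> \<Longrightarrow> lab (g t) u = \<sigma> \<longleftrightarrow> sat t (\<phi> \<sigma>) (\<lambda>_. u) (\<lambda>_. {})"
      using \<phi>(2) t by blast
    have lin: "lab (g t) u \<in> fst \<Sigma>" using wf_lab[OF g(1)] g(2) u by simp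
    have key: "ACCf (L!k) (list_decode (brun tr ?mk t) ! k) \<longleftrightarrow> lab (g t) u = L!k" if "k < K" for k
    proof -
      have "list_decode (brun tr ?mk t) ! k = brun (TRf (L!k)) ?mk t"
        using that by (simp add: tr_def brun_prtr TR_def)
      moreover have "L!k \<in> fst \<Sigma>"
      proof -
        have "L!k \<in> set L" using that unfolding K_def by (rule nth_mem)
        then show ?thesis using L(1) by simp
      qed
      moreover have "lab (g t) u = L!k \<longleftrightarrow> sat t (\<phi> (L!k)) (\<lambda>_. u) (\<lambda>_. {})"
        by (rule \<phi>t[OF u calculation(2)])
      moreover have "sat t (\<phi> (L!k)) (\<lambda>_. u) (\<lambda>_. {}) \<longleftrightarrow> ACCf (L!k) (brun (TRf (L!k)) ?mk t)"
        unfolding mk by (rule A(3)) (use u in simp)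
      ultimately show ?thesis by simp
    qed
    have "lab (g t) u \<in> set L" using lin L(1) by simp
    then obtain k0 where k0: "k0 < K" "L!k0 = lab (g t) u"
      unfolding K_def by (auto simp: in_set_conv_nth)
    have "\<exists>k<K. lab (g t) u = L!k \<and> ACCf (L!k) (list_decode (brun tr ?mk t) ! k)"
    proof (intro exI[of _ k0] conjI)
      show "k0 < K" by (rule k0(1))
      show "lab (g t) u = L ! k0" using k0(2) by simp
      show "ACCf (L ! k0) (list_decode (brun tr ?mk t) ! k0)"
        by (subst key[OF k0(1)]) (rule k0(2)[symmetric])
    qed
    moreover have "\<sigma> = lab (g t) u" if "\<exists>k<K. \<sigma> = L!k \<and> ACCf (L!k) (list_decode (brun tr ?mk t) ! k)" for \<sigma>
      using that key by auto
    ultimately show "lab (g t) u = ot (brun tr ?mk t)"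
    proof -
      let ?P = "\<lambda>\<sigma>. \<exists>k<K. \<sigma> = L!k \<and> ACCf (L!k) (list_decode (brun tr ?mk t) ! k)"
      assume a1: "\<exists>k<K. lab (g t) u = L!k \<and> ACCf (L!k) (list_decode (brun tr ?mk t) ! k)"
        and a2: "\<And>\<sigma>. ?P \<sigma> \<Longrightarrow> \<sigma> = lab (g t) u"
      have "?P (lab (g t) u)" using a1 .
      then have "?P (SOME \<sigma>. ?P \<sigma>)" by (rule someI)
      then have "(SOME \<sigma>. ?P \<sigma>) = lab (g t) u" by (rule a2)
      then show ?thesis unfolding ot_def by simp
    qed
  qed
qed




lemma evalC_single:
  assumes "step X t C = Some (Node (Inr C') [])"
  shows "evalC X t C s \<longleftrightarrow> evalC X t C' s"
proof
  assume "evalC X t C s"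
  then show "evalC X t C' s"
  proof cases
    case (evalC_step r)
    then have "evalT X t (Node (Inr C') []) s" using assms by simp
    then show ?thesis by cases auto
  qed
next
  assume "evalC X t C' s"
  then show "evalC X t C s" using assms by (auto intro: evalC_step evalT_conf)
qed

definition sstep :: "('q, 'm, 'a, 'c) hm \<Rightarrow> 'a rtree \<Rightarrow> ('q, 'm) conf \<Rightarrow> ('q, 'm) conf \<Rightarrow> bool" where
  "sstep X t C C' \<longleftrightarrow> step X t C = Some (Node (Inr C') [])"

lemma evalC_star:
  assumes "(sstep X t)\<^sup>*\<^sup>* C C'"
  shows "evalC X t C s \<longleftrightarrow> evalC X t C' s"
  using assms
proof (induction rule: rtranclp_induct)
  case base then show ?case by simp
next
  case (step y z)
  then show ?case using evalC_single[of X t y z s] by (simp add: sstep_def)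
qed

lemma step_eq:
  assumes "hm_delta X q (lab t u) (\<mu> u) = hm_delta X q' (lab t u) (\<mu>' u)"
    and "\<And>w. w \<noteq> u \<Longrightarrow> \<mu> w = \<mu>' w"
  shows "step X t (u, q, \<mu>) = step X t (u, q', \<mu>')"
proof -
  have e: "\<mu>(u := m) = \<mu>'(u := m)" for m using assms(2) by auto
  show ?thesis unfolding step.simps assms(1) e by (rule refl)
qed

definition simrel :: "('q, 'm, 'a, 'c) hm \<Rightarrow> 'a rtree \<Rightarrow> ('p, 'n, 'b, 'c) hm \<Rightarrow> 'b rtree
    \<Rightarrow> (('q, 'm) conf \<Rightarrow> ('p, 'n) conf \<Rightarrow> bool) \<Rightarrow> bool" where
  "simrel X t Y t' R \<longleftrightarrow> (\<forall>C C'. R C C' \<longrightarrow> rel_option (rel_rtree (rel_sum (=) R)) (step X t C) (step Y t' C'))"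

lemma simrel_conv:
  assumes "simrel X t Y t' R"
  shows "simrel Y t' X t (conversep R)"
  unfolding simrel_def
proof (intro allI impI)
  fix C C' assume "conversep R C C'"
  then have "R C' C" by simp
  then have h: "rel_option (rel_rtree (rel_sum (=) R)) (step X t C') (step Y t' C)"
    using assms unfolding simrel_def by blast
  have e1: "rel_sum (=) (conversep R) = conversep (rel_sum (=) R)"
    by (metis conversep_eq sum.rel_conversep)
  have e2: "rel_rtree (conversep (rel_sum (=) R)) = conversep (rel_rtree (rel_sum (=) R))"
    by (rule rtree.rel_conversep)
  have e3: "rel_option (conversep (rel_rtree (rel_sum (=) R))) (step Y t' C) (step X t C')"
    using h by (simp add: option.rel_conversep)
  show "rel_option (rel_rtree (rel_sum (=) (conversep R))) (step Y t' C) (step X t C')"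
    unfolding e1 e2 by (rule e3)
qed

lemma rel_option_SomeD: "rel_option P (Some x) y \<Longrightarrow> \<exists>y'. y = Some y' \<and> P x y'"
  by (cases y) auto

lemma sim_eval:
  assumes sim: "simrel X t Y t' R"
  shows "evalT X t r s \<Longrightarrow> rel_rtree (rel_sum (=) R) r r' \<Longrightarrow> evalT Y t' r' s"
    and "evalC X t C s \<Longrightarrow> R C C' \<Longrightarrow> evalC Y t' C' s"
proof (induction arbitrary: r' and C' rule: evalT_evalC.inducts)
  case (evalT_out ts ss c)
  obtain a ts' where r': "r' = Node a ts'" by (cases r')
  have a: "a = Inl c" and l: "list_all2 (rel_rtree (rel_sum (=) R)) ts ts'"
    using evalT_out.prems unfolding r' by (auto elim: rel_sum.cases)
  have "list_all2 (evalT Y t') ts' ss"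
    using evalT_out.IH l by (auto simp: list_all2_conv_all_nth)
  then show ?case unfolding r' a by (rule evalT_evalC.evalT_out)
next
  case (evalT_conf C s)
  obtain a ts' where r': "r' = Node a ts'" by (cases r')
  obtain C'' where a: "a = Inr C''" "R C C''" and l: "ts' = []"
    using evalT_conf.prems unfolding r' by (auto elim: rel_sum.cases)
  show ?case unfolding r' a l by (rule evalT_evalC.evalT_conf) (use evalT_conf a(2) in blast)
next
  case (evalC_step C r s)
  obtain r'' where st: "step Y t' C' = Some r''" and rr: "rel_rtree (rel_sum (=) R) r r''"
    using rel_option_SomeD[of _ r "step Y t' C'"] sim evalC_step.prems evalC_step(1) unfolding simrel_def
    by metis
  show ?case by (rule evalT_evalC.evalC_step[OF st]) (use evalC_step rr in blast)
qed

lemma sim_evalC_iff: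
  assumes "simrel X t Y t' R" "R C C'"
  shows "evalC X t C s \<longleftrightarrow> evalC Y t' C' s"
proof
  assume "evalC X t C s" then show "evalC Y t' C' s" by (rule sim_eval(2)[OF assms(1)]) (rule assms(2))
next
  assume "evalC Y t' C' s" then show "evalC X t C s" by (rule sim_eval(2)[OF simrel_conv[OF assms(1)]]) (simp add: assms(2))
qed

lemma rel_rtree_set:
  assumes "rel_rtree Q r r'" "x \<in> set_rtree r"
  shows "\<exists>y\<in>set_rtree r'. Q x y"
  using assms
proof (induction r arbitrary: r')
  case (Node a ts)
  obtain b ts' where r': "r' = Node b ts'" by (cases r')
  have ab: "Q a b" and l: "list_all2 (rel_rtree Q) ts ts'" using Node.prems(1) unfolding r' by auto
  show ?case
  proof (cases "x = a")
    case True then show ?thesis using ab r' by auto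
  next
    case False
    then obtain s where s: "s \<in> set ts" "x \<in> set_rtree s" using Node.prems(2) by auto
    then obtain i where i: "i < length ts" "s = ts ! i" by (metis in_set_conv_nth)
    have "rel_rtree Q (ts!i) (ts'!i)" "i < length ts'" using l i by (auto simp: list_all2_conv_all_nth)
    then obtain y where "y \<in> set_rtree (ts'!i)" "Q x y" using Node.IH[OF s(1)] s i by blast
    then show ?thesis unfolding r' using \<open>i < length ts'\<close> by (auto intro: nth_mem)
  qed
qed

lemma sim_step_run:
  assumes "simrel X t Y t' R" "R C C'" "step X t C = Some r" "Inr D \<in> set_rtree r"
  shows "\<exists>r' D'. step Y t' C' = Some r' \<and> Inr D' \<in> set_rtree r' \<and> R D D'"
proof -
  obtain r' where st: "step Y t' C' = Some r'" and rr: "rel_rtree (rel_sum (=) R) r r'"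
    using rel_option_SomeD[of _ r "step Y t' C'"] assms(1-3) unfolding simrel_def by metis
  obtain y where y: "y \<in> set_rtree r'" "rel_sum (=) R (Inr D) y" using rel_rtree_set[OF rr assms(4)] by blast
  obtain D' where "y = Inr D'" "R D D'"
  proof (cases y)
    case (Inl a) then show ?thesis using y(2) by simp
  next
    case (Inr D') then show ?thesis using y(2) that by simp
  qed
  then show ?thesis using st y(1) by blast
qed

fun chainf :: "('q, 'm, 'a, 'c) hm \<Rightarrow> 'a rtree \<Rightarrow> ('q, 'm) conf list \<Rightarrow> bool" where
  "chainf X t [] = True"
| "chainf X t [C] = True"
| "chainf X t (C # D # cs) = ((\<exists>r. step X t C = Some r \<and> Inr D \<in> set_rtree r) \<and> chainf X t (D # cs))"

lemma chainf_nth: "chainf X t cs \<longleftrightarrow> (\<forall>i. Suc i < length cs \<longrightarrow> (\<exists>r. step X t (cs ! i) = Some r \<and> Inr (cs ! Suc i) \<in> set_rtree r))"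
proof (induction X t cs rule: chainf.induct)
  case (3 X t C D cs)
  show ?case
  proof
    assume "chainf X t (C # D # cs)"
    then show "\<forall>i. Suc i < length (C # D # cs) \<longrightarrow> (\<exists>r. step X t ((C # D # cs) ! i) = Some r \<and> Inr ((C # D # cs) ! Suc i) \<in> set_rtree r)"
      using 3 by (auto simp: less_Suc_eq_0_disj)
  next
    assume h: "\<forall>i. Suc i < length (C # D # cs) \<longrightarrow> (\<exists>r. step X t ((C # D # cs) ! i) = Some r \<and> Inr ((C # D # cs) ! Suc i) \<in> set_rtree r)"
    have "\<forall>i. Suc i < length (D # cs) \<longrightarrow> (\<exists>r. step X t ((D # cs) ! i) = Some r \<and> Inr ((D # cs) ! Suc i) \<in> set_rtree r)"
    proof (intro allI impI)
      fix i assume "Suc i < length (D # cs)"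
      then show "\<exists>r. step X t ((D # cs) ! i) = Some r \<and> Inr ((D # cs) ! Suc i) \<in> set_rtree r"
        using h[rule_format, of "Suc i"] by simp
    qed
    then show "chainf X t (C # D # cs)" using 3 h[rule_format, of 0] by simp
  qed
qed auto

lemma branch_run_chainf: "branch_run X t cs \<longleftrightarrow> cs \<noteq> [] \<and> hd cs = init_conf X \<and> chainf X t cs"
  unfolding branch_run_def chainf_nth by blast

lemma sim_chain:
  assumes sim: "simrel X t Y t' R"
  shows "chainf X t (C # cs) \<Longrightarrow> R C C' \<Longrightarrow> \<exists>cs'. chainf Y t' (C' # cs') \<and> list_all2 R cs cs'"
proof (induction cs arbitrary: C C')
  case Nil then show ?case by (intro exI[of _ "[]"]) simp
next
  case (Cons D cs)
  obtain r where r: "step X t C = Some r" "Inr D \<in> set_rtree r" and ch: "chainf X t (D # cs)" using Cons.prems(1) by auto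
  obtain r' D' where r': "step Y t' C' = Some r'" "Inr D' \<in> set_rtree r'" "R D D'"
    using sim_step_run[OF sim Cons.prems(2) r] by blast
  obtain cs' where "chainf Y t' (D' # cs')" "list_all2 R cs cs'" using Cons.IH[OF ch r'(3)] by blast
  then show ?case using r' by (intro exI[of _ "D' # cs'"]) auto
qed

lemma wfY_set: "wf_tree_Y A Y r \<Longrightarrow> Inr y \<in> set_rtree r \<Longrightarrow> y \<in> Y"
proof (induction r)
  case (Node a ts)
  show ?case
  proof (cases a)
    case (Inl c) then show ?thesis using Node by (auto simp: list_all_iff)
  next
    case (Inr z) then show ?thesis using Node by auto
  qed
qed

lemma wfY_map: "wf_tree_Y A Y r \<Longrightarrow> (\<And>y. y \<in> Y \<Longrightarrow> f y \<in> Y') \<Longrightarrow> wf_tree_Y A Y' (map_rtree (map_sum id f) r)"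
proof (induction r)
  case (Node a ts)
  show ?case
  proof (cases a)
    case (Inl c) then show ?thesis using Node by (auto simp: list_all_iff)
  next
    case (Inr z) then show ?thesis using Node by auto
  qed
qed

lemma mapsum_Inr: "map_sum id f x = Inr y \<Longrightarrow> \<exists>z. x = Inr z \<and> y = f z" by (cases x) auto

definition ren :: "('s, 'n, 'a, 'c) hm \<Rightarrow> ('s \<Rightarrow> nat) \<Rightarrow> ('n \<Rightarrow> nat) \<Rightarrow> (nat, nat, 'a, 'c) hm" where
  "ren B fs fm = \<lparr>hm_states = fs ` hm_states B, hm_mem = fm ` hm_mem B, hm_top = fm (hm_top B),
     hm_in = hm_in B, hm_outa = hm_outa B, hm_init = fs (hm_init B),
     hm_delta = (\<lambda>q \<sigma> m. if q \<in> fs ` hm_states B \<and> m \<in> fm ` hm_mem B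
        then map_option (map_rtree (map_sum id (\<lambda>(q', m', d). (fs q', fm m', d))))
               (hm_delta B (inv_into (hm_states B) fs q) \<sigma> (inv_into (hm_mem B) fm m))
        else None)\<rparr>"

definition renR :: "('s, 'n, 'a, 'c) hm \<Rightarrow> ('s \<Rightarrow> nat) \<Rightarrow> ('n \<Rightarrow> nat) \<Rightarrow> (nat, nat) conf \<Rightarrow> ('s, 'n) conf \<Rightarrow> bool" where
  "renR B fs fm C' C \<longleftrightarrow> fst C' = fst C \<and> fst (snd C) \<in> hm_states B \<and> fst (snd C') = fs (fst (snd C)) \<and>
     (\<forall>v. snd (snd C) v \<in> hm_mem B \<and> snd (snd C') v = fm (snd (snd C) v))"

lemma ren_simrel:
  assumes B: "is_uTHM B" and fs: "inj_on fs (hm_states B)" and fm: "inj_on fm (hm_mem B)"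
  shows "simrel (ren B fs fm) t B t (renR B fs fm)"
  unfolding simrel_def
proof (intro allI impI)
  fix C' C assume R: "renR B fs fm C' C"
  obtain u q \<mu> where C: "C = (u, q, \<mu>)" by (cases C) auto
  obtain q' \<mu>' where C': "C' = (u, q', \<mu>')" using R C by (cases C') (auto simp: renR_def)
  have q: "q \<in> hm_states B" "q' = fs q" and mu: "\<And>v. \<mu> v \<in> hm_mem B" "\<And>v. \<mu>' v = fm (\<mu> v)"
    using R unfolding C C' renR_def by auto
  let ?mf = "map_sum id (\<lambda>(q', m', d). (fs q', fm m', d))"
  have dl: "hm_delta (ren B fs fm) q' \<sigma> (\<mu>' u) = map_option (map_rtree ?mf) (hm_delta B q \<sigma> (\<mu> u))" for \<sigma>
  proof -
    have a1: "q' \<in> fs ` hm_states B" using q by simp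
    have a2: "\<mu>' u \<in> fm ` hm_mem B" using mu by simp
    have a3: "inv_into (hm_states B) fs q' = q" using q fs by (simp add: inv_into_f_f)
    have a4: "inv_into (hm_mem B) fm (\<mu>' u) = \<mu> u" using mu fm by (simp add: inv_into_f_f)
    show ?thesis unfolding ren_def using a1 a2 by (simp only: hm.simps a3 a4 if_True simp_thms)
  qed
  show "rel_option (rel_rtree (rel_sum (=) (renR B fs fm))) (step (ren B fs fm) t C') (step B t C)"
  proof (cases "u \<in> nodes t")
    case False then show ?thesis unfolding C C' by simp
  next
    case True
    show ?thesis
    proof (cases "hm_delta B q (lab t u) (\<mu> u)")
      case None then show ?thesis unfolding C C' using True dl by simp
    next
      case (Some r)
      have wf: "wf_tree_Y (hm_outa B) (hm_states B \<times> hm_mem B \<times> UNIV) r"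
        using B Some unfolding is_uTHM_def by blast
      have mv: "(\<forall>q' m' d. Inr (q', m', d) \<in> set_rtree (map_rtree ?mf r) \<longrightarrow> move t u d \<noteq> None) \<longleftrightarrow>
                (\<forall>q' m' d. Inr (q', m', d) \<in> set_rtree r \<longrightarrow> move t u d \<noteq> None)"
      proof
        assume h: "\<forall>q' m' d. Inr (q', m', d) \<in> set_rtree (map_rtree ?mf r) \<longrightarrow> move t u d \<noteq> None"
        show "\<forall>q' m' d. Inr (q', m', d) \<in> set_rtree r \<longrightarrow> move t u d \<noteq> None"
        proof (intro allI impI)
          fix a b d assume "Inr (a, b, d) \<in> set_rtree r"
          then have "Inr (fs a, fm b, d) \<in> set_rtree (map_rtree ?mf r)"
            by (simp only: rtree.set_map) (rule image_eqI[where x="Inr (a,b,d)"], simp_all)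
          then show "move t u d \<noteq> None" using h by blast
        qed
      next
        assume h: "\<forall>q' m' d. Inr (q', m', d) \<in> set_rtree r \<longrightarrow> move t u d \<noteq> None"
        show "\<forall>q' m' d. Inr (q', m', d) \<in> set_rtree (map_rtree ?mf r) \<longrightarrow> move t u d \<noteq> None"
        proof (intro allI impI)
          fix a b d assume "Inr (a, b, d) \<in> set_rtree (map_rtree ?mf r)"
          then obtain x where x: "x \<in> set_rtree r" "?mf x = Inr (a, b, d)" by (auto simp: rtree.set_map)
          then obtain a' b' where "x = Inr (a', b', d)" using mapsum_Inr[OF x(2)] by auto
          then show "move t u d \<noteq> None" using h x by blast
        qed
      qed
      show ?thesis
      proof (cases "\<forall>q' m' d. Inr (q', m', d) \<in> set_rtree r \<longrightarrow> move t u d \<noteq> None")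
        case False
        then have "\<not> (\<forall>q' m' d. Inr (q', m', d) \<in> set_rtree (map_rtree ?mf r) \<longrightarrow> move t u d \<noteq> None)"
          using mv by blast
        then show ?thesis unfolding C C' using True dl Some False by (simp only: step.simps if_False if_True simp_thms option.simps option.rel_inject)
      next
        case ok: True
        let ?g1 = "\<lambda>x. case x of Inl c \<Rightarrow> Inl c | Inr (q'', m'', d) \<Rightarrow> Inr (the (move t u d), q'', \<mu>'(u := m''))"
        let ?g2 = "\<lambda>x. case x of Inl c \<Rightarrow> Inl c | Inr (q'', m'', d) \<Rightarrow> Inr (the (move t u d), q'', \<mu>(u := m''))"
        have s1: "step (ren B fs fm) t C' = Some (map_rtree ?g1 (map_rtree ?mf r))"
          unfolding C' using True dl Some mv ok by simp
        have s2: "step B t C = Some (map_rtree ?g2 r)"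
          unfolding C using True Some ok by simp
        have "rel_rtree (rel_sum (=) (renR B fs fm)) (map_rtree ?g1 (map_rtree ?mf r)) (map_rtree ?g2 r)"
          unfolding rtree.rel_map rtree.map_comp
        proof (rule rtree.rel_refl_strong)
          fix x assume x: "x \<in> set_rtree r"
          show "rel_sum (=) (renR B fs fm) ((?g1 \<circ> ?mf) x) (?g2 x)"
          proof (cases x)
            case (Inl c) then show ?thesis by simp
          next
            case (Inr y)
            obtain a b d where y: "y = (a, b, d)" by (cases y) auto
            have "(a, b, d) \<in> hm_states B \<times> hm_mem B \<times> UNIV" using wfY_set[OF wf] x Inr y by blast
            then show ?thesis using Inr y mu by (simp add: renR_def)
          qed
        qed
        then show ?thesis unfolding s1 s2 by simp
      qed
    qed
  qed
qed

lemma card_pos_eq: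
  assumes "list_all2 (\<lambda>a b. fst a = fst b) xs ys"
  shows "card {i. i < length xs \<and> fst (xs ! i) = u} = card {i. i < length ys \<and> fst (ys ! i) = u}"
proof -
  have "{i. i < length xs \<and> fst (xs ! i) = u} = {i. i < length ys \<and> fst (ys ! i) = u}"
    using assms by (auto simp: list_all2_conv_all_nth)
  then show ?thesis by simp
qed

lemma ren_props:
  assumes B: "is_uTHM B" and fs: "inj_on fs (hm_states B)" and fm: "inj_on fm (hm_mem B)"
  shows "is_uTHM (ren B fs fm)" "hm_in (ren B fs fm) = hm_in B" "hm_outa (ren B fs fm) = hm_outa B"
    "hm_output (ren B fs fm) t = hm_output B t" "is_THM B \<Longrightarrow> is_THM (ren B fs fm)"
proof -
  show "hm_in (ren B fs fm) = hm_in B" "hm_outa (ren B fs fm) = hm_outa B" by (simp_all add: ren_def)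
  have R0: "renR B fs fm (init_conf (ren B fs fm)) (init_conf B)"
    using B unfolding renR_def init_conf_def ren_def is_uTHM_def by simp
  have ev: "evalC (ren B fs fm) t (init_conf (ren B fs fm)) s \<longleftrightarrow> evalC B t (init_conf B) s" for s
    by (rule sim_evalC_iff[OF ren_simrel[OF B fs fm] R0])
  show "hm_output (ren B fs fm) t = hm_output B t" unfolding hm_output_def ev by simp
  let ?mf = "map_sum id (\<lambda>(q', m', d). (fs q', fm m', d))"
  show U: "is_uTHM (ren B fs fm)"
    unfolding is_uTHM_def
  proof (intro conjI allI impI)
    show "finite (hm_states (ren B fs fm))" "finite (hm_mem (ren B fs fm))" "hm_top (ren B fs fm) \<in> hm_mem (ren B fs fm)"
      "hm_init (ren B fs fm) \<in> hm_states (ren B fs fm)" "finite (fst (hm_in (ren B fs fm)))" "finite (fst (hm_outa (ren B fs fm)))"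
      using B by (auto simp: ren_def is_uTHM_def)
    fix q \<sigma> m r assume h: "hm_delta (ren B fs fm) q \<sigma> m = Some r"
    then have qm: "q \<in> fs ` hm_states B" "m \<in> fm ` hm_mem B" by (auto simp: ren_def split: if_splits)
    then obtain r0 where r0: "hm_delta B (inv_into (hm_states B) fs q) \<sigma> (inv_into (hm_mem B) fm m) = Some r0"
      "r = map_rtree ?mf r0" using h by (auto simp: ren_def)
    have P: "inv_into (hm_states B) fs q \<in> hm_states B \<and> \<sigma> \<in> fst (hm_in B) \<and> inv_into (hm_mem B) fm m \<in> hm_mem B \<and>
        wf_tree_Y (hm_outa B) (hm_states B \<times> hm_mem B \<times> UNIV) r0 \<and>
        (\<forall>q' m' i. Inr (q', m', Dn i) \<in> set_rtree r0 \<longrightarrow> 1 \<le> i \<and> i \<le> snd (hm_in B) \<sigma>)"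
      using B r0(1) unfolding is_uTHM_def by blast
    show "q \<in> hm_states (ren B fs fm)" "m \<in> hm_mem (ren B fs fm)" using qm by (simp_all add: ren_def)
    show "\<sigma> \<in> fst (hm_in (ren B fs fm))" using P by (simp add: ren_def)
    show "wf_tree_Y (hm_outa (ren B fs fm)) (hm_states (ren B fs fm) \<times> hm_mem (ren B fs fm) \<times> UNIV) r"
      unfolding r0(2) using P by (auto simp: ren_def intro!: wfY_map)
    fix q' m' i assume "Inr (q', m', Dn i) \<in> set_rtree r"
    then obtain x where x: "x \<in> set_rtree r0" "?mf x = Inr (q', m', Dn i)" unfolding r0(2) by (auto simp: rtree.set_map)
    then obtain a b where "x = Inr (a, b, Dn i)" using mapsum_Inr[OF x(2)] by auto
    then show "1 \<le> i" "i \<le> snd (hm_in (ren B fs fm)) \<sigma>" using P x by (auto simp: ren_def)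
  qed
  assume T: "is_THM B"
  then obtain N where N: "\<forall>t cs u. wf_tree (hm_in B) t \<longrightarrow> branch_run B t cs \<longrightarrow>
        card {i. i < length cs \<and> fst (cs ! i) = u} \<le> N" unfolding is_THM_def by blast
  show "is_THM (ren B fs fm)"
    unfolding is_THM_def
  proof (intro conjI exI[of _ N] allI impI)
    show "is_uTHM (ren B fs fm)" by (rule U)
    fix t cs u assume wt: "wf_tree (hm_in (ren B fs fm)) t" and br: "branch_run (ren B fs fm) t cs"
    then obtain rest where cs: "cs = init_conf (ren B fs fm) # rest" "chainf (ren B fs fm) t cs"
      unfolding branch_run_chainf by (cases cs) auto
    obtain rest' where ch: "chainf B t (init_conf B # rest')" and l: "list_all2 (renR B fs fm) rest rest'"
      using sim_chain[OF ren_simrel[OF B fs fm] _ R0] cs by blast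
    have brB: "branch_run B t (init_conf B # rest')" using ch unfolding branch_run_chainf by simp
    have "list_all2 (\<lambda>a b. fst a = fst b) cs (init_conf B # rest')"
      unfolding cs(1) using l R0 by (auto simp: renR_def init_conf_def elim: list_all2_mono)
    then have "card {i. i < length cs \<and> fst (cs ! i) = u} = card {i. i < length (init_conf B # rest') \<and> fst ((init_conf B # rest') ! i) = u}"
      by (rule card_pos_eq)
    also have "\<dots> \<le> N"
    proof -
      have wt': "wf_tree (hm_in B) t" using wt by (simp add: ren_def)
      show ?thesis by (rule N[rule_format, OF wt' brB])
    qed
    finally show "card {i. i < length cs \<and> fst (cs ! i) = u} \<le> N" .
  qed
qed

lemma nat_machine:
  assumes B: "is_uTHM (B :: ('s, 'n, 'a, 'c) hm)"
  shows "\<exists>B' :: (nat, nat, 'a, 'c) hm. is_uTHM B' \<and> hm_in B' = hm_in B \<and> hm_outa B' = hm_outa B \<and>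
     (\<forall>t. hm_output B' t = hm_output B t) \<and> (is_THM B \<longrightarrow> is_THM B')"
proof -
  obtain fs :: "'s \<Rightarrow> nat" where fs: "inj_on fs (hm_states B)"
    using finite_imp_inj_to_nat_seg[of "hm_states B"] B unfolding is_uTHM_def by blast
  obtain fm :: "'n \<Rightarrow> nat" where fm: "inj_on fm (hm_mem B)"
    using finite_imp_inj_to_nat_seg[of "hm_mem B"] B unfolding is_uTHM_def by blast
  show ?thesis using ren_props[OF B fs fm] by blast
qed




section \<open>Contexts\<close>

definition sv :: "('d \<Rightarrow> mark \<Rightarrow> nat list \<Rightarrow> nat) \<Rightarrow> 'd rtree \<Rightarrow> nat list \<Rightarrow> nat" where
  "sv tr t u = brun tr mk0 (subt t u)"

definition svs :: "('d \<Rightarrow> mark \<Rightarrow> nat list \<Rightarrow> nat) \<Rightarrow> 'd rtree \<Rightarrow> nat list \<Rightarrow> nat list" where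
  "svs tr t u = map (\<lambda>j. sv tr t (u @ [Suc j])) [0..<nch t u]"

lemma mk0_eta: "(\<lambda>p. mk0 (f p)) = mk0" by (rule ext) (simp add: mk0_def)

lemma sv_unfold: "sv tr t u = tr (lab t u) ({}, {}) (svs tr t u)"
proof (cases "subt t u")
  case (Node a ts)
  have e0: "(\<lambda>p. mk0 (Suc i # p)) = mk0" for i by (rule mk0_eta)
  have "sv tr t u = tr a (mk0 []) (map (\<lambda>i. brun tr mk0 (ts ! i)) [0..<length ts])"
    unfolding sv_def Node by (simp only: brun.simps e0)
  also have "map (\<lambda>i. brun tr mk0 (ts ! i)) [0..<length ts] = svs tr t u"
    unfolding svs_def sv_def nch_def Node by (simp add: subt_child Node)
  finally show ?thesis by (simp add: Node lab_def mk0_def)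
qed

fun ctxf :: "('d \<Rightarrow> mark \<Rightarrow> nat list \<Rightarrow> nat) \<Rightarrow> 'd rtree \<Rightarrow> nat list \<Rightarrow> nat \<Rightarrow> nat" where
  "ctxf tr (Node a ts) [] q = q"
| "ctxf tr (Node a ts) (i # w) q = (if i = 0 then q else
     tr a ({}, {}) ((map (\<lambda>j. brun tr mk0 (ts ! j)) [0..<length ts])[i - 1 := ctxf tr (ts ! (i - 1)) w q]))"

lemma ctxf_Nil[simp]: "ctxf tr t [] q = q" by (cases t) simp

lemma ctx_brun:
  assumes "u \<in> nodes t" "\<And>p. (\<nexists>v. p = u @ v) \<Longrightarrow> mk p = ({}, {})"
  shows "brun tr mk t = ctxf tr t u (brun tr (\<lambda>p. mk (u @ p)) (subt t u))"
  using assms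
proof (induction u arbitrary: t mk)
  case Nil then show ?case by simp
next
  case (Cons i w)
  obtain a ts k where t: "t = Node a ts" "i = Suc k" "k < length ts" "w \<in> nodes (ts!k)"
    using Cons.prems(1) by (cases t) (auto simp: Cons_in_nodes_Node)
  have IH: "brun tr (\<lambda>p. mk (Suc k # p)) (ts!k) = ctxf tr (ts!k) w (brun tr (\<lambda>p. mk (Suc k # w @ p)) (subt (ts!k) w))"
  proof (rule Cons.IH[OF t(4)])
    fix p assume "\<nexists>v. p = w @ v"
    then have "\<nexists>v. Suc k # p = (i # w) @ v" using t(2) by simp
    then show "mk (Suc k # p) = ({}, {})" by (rule Cons.prems(2))
  qed
  have oth: "brun tr (\<lambda>p. mk (Suc j # p)) (ts!j) = brun tr mk0 (ts!j)" if "j \<noteq> k" for j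
  proof -
    have "(\<lambda>p. mk (Suc j # p)) = mk0"
    proof
      fix p
      have "\<nexists>v. Suc j # p = (i # w) @ v" using that t(2) by simp
      then show "mk (Suc j # p) = mk0 p" using Cons.prems(2) by (simp add: mk0_def)
    qed
    then show ?thesis by (simp add: mk0_def)
  qed
  have m0: "mk [] = ({}, {})" using Cons.prems(2) by simp
  have lists: "map (\<lambda>j. brun tr (\<lambda>p. mk (Suc j # p)) (ts ! j)) [0..<length ts] =
    (map (\<lambda>j. brun tr mk0 (ts ! j)) [0..<length ts])[k := ctxf tr (ts!k) w (brun tr (\<lambda>p. mk (Suc k # w @ p)) (subt (ts!k) w))]"
  proof (rule nth_equalityI)
    fix j assume "j < length (map (\<lambda>j. brun tr (\<lambda>p. mk (Suc j # p)) (ts ! j)) [0..<length ts])"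
    then have j: "j < length ts" by simp
    show "map (\<lambda>j. brun tr (\<lambda>p. mk (Suc j # p)) (ts ! j)) [0..<length ts] ! j =
      (map (\<lambda>j. brun tr mk0 (ts ! j)) [0..<length ts])[k := ctxf tr (ts!k) w (brun tr (\<lambda>p. mk (Suc k # w @ p)) (subt (ts!k) w))] ! j"
      using j t(3) by (cases "j = k") (simp_all add: IH oth)
  qed simp
  show ?case unfolding t(1,2) by (simp only: brun.simps m0 lists) simp
qed

lemma ctx_step:
  assumes "u @ [Suc i] \<in> nodes t"
  shows "ctxf tr t (u @ [Suc i]) q = ctxf tr t u (tr (lab t u) ({}, {}) ((svs tr t u)[i := q]))"
  using assms
proof (induction u arbitrary: t)
  case Nil
  obtain a ts where t: "t = Node a ts" by (cases t)
  have "map (\<lambda>j. brun tr mk0 (ts ! j)) [0..<length ts] = svs tr t []"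
    by (simp add: svs_def sv_def t nch_def)
  then show ?case by (simp add: t)
next
  case (Cons k w)
  obtain a ts k' where t: "t = Node a ts" "k = Suc k'" "k' < length ts" "w @ [Suc i] \<in> nodes (ts!k')"
    using Cons.prems by (cases t) (auto simp: Cons_in_nodes_Node)
  have e: "svs tr (Node a ts) (Suc k' # w) = svs tr (ts!k') w"
    by (simp add: svs_def sv_def t nch_def)
  show ?case using Cons.IH[OF t(4)] by (simp add: t e)
qed

lemma ctxf_less:
  assumes "\<And>a m cs. tr a m cs < N" "q < N"
  shows "ctxf tr t u q < N"
  using assms by (cases "(tr, t, u, q)" rule: ctxf.cases) auto

lemma sel_brun:
  assumes "u \<in> nodes t"
  shows "brun tr (\<lambda>p. if p = u then (UNIV, {}) else ({}, {})) t = ctxf tr t u (tr (lab t u) (UNIV, {}) (svs tr t u))"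
proof -
  have "brun tr (\<lambda>p. if p = u then (UNIV, {}) else ({}, {})) t =
      ctxf tr t u (brun tr (\<lambda>p. (\<lambda>p. if p = u then (UNIV, {}) else ({}, {})) (u @ p)) (subt t u))"
    by (rule ctx_brun[OF assms]) auto
  also have "brun tr (\<lambda>p. (\<lambda>p. if p = u then (UNIV, {}) else ({}, {})) (u @ p)) (subt t u) = tr (lab t u) (UNIV, {}) (svs tr t u)"
  proof (cases "subt t u")
    case (Node a ts)
    have e0: "(\<lambda>p. (\<lambda>p. if p = u then (UNIV, {}) else ({}, {})) (u @ Suc i # p)) = mk0" for i
      by (rule ext) (simp add: mk0_def)
    have "map (\<lambda>i. brun tr mk0 (ts ! i)) [0..<length ts] = svs tr t u"
      unfolding svs_def sv_def nch_def Node by (simp add: subt_child Node)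
    then show ?thesis unfolding Node by (simp only: brun.simps append_Cons[symmetric] e0) (simp add: Node lab_def)
  qed
  finally show ?thesis .
qed

definition tabf :: "('d \<Rightarrow> mark \<Rightarrow> nat list \<Rightarrow> nat) \<Rightarrow> nat \<Rightarrow> 'd rtree \<Rightarrow> nat list \<Rightarrow> nat list" where
  "tabf tr N t u = map (ctxf tr t u) [0..<N]"

definition childtab :: "('d \<Rightarrow> mark \<Rightarrow> nat list \<Rightarrow> nat) \<Rightarrow> nat \<Rightarrow> nat list \<Rightarrow> 'd \<Rightarrow> nat list \<Rightarrow> nat \<Rightarrow> nat list" where
  "childtab tr N tab d ss i = map (\<lambda>q. tab ! (tr d ({}, {}) (ss[i := q]))) [0..<N]"

lemma childtab_ok:
  assumes "\<And>a m cs. tr a m cs < N" "u @ [Suc i] \<in> nodes t"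
  shows "childtab tr N (tabf tr N t u) (lab t u) (svs tr t u) i = tabf tr N t (u @ [Suc i])"
  unfolding childtab_def tabf_def
  by (rule nth_equalityI) (simp_all add: ctx_step[OF assms(2)] assms(1))

lemma tabf_root: "tabf tr N t [] = [0..<N]"
  unfolding tabf_def by (rule nth_equalityI) simp_all

lemma tabf_nth: "x < N \<Longrightarrow> tabf tr N t u ! x = ctxf tr t u x"
  unfolding tabf_def by simp




datatype 'q bst = D1 bool | U1 nat | D2 "nat list" | U2 | Sim 'q
datatype ('a, 'm) bmem = Top | Col bool "nat list" | Pas bool "nat list" "nat list" nat | Fin 'a 'm

definition leaf :: "'x \<Rightarrow> ('c + 'x) rtree" where "leaf x = Node (Inr x) []"

lemma set_leaf[simp]: "set_rtree (leaf x) = {Inr x}" by (simp add: leaf_def)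
lemma wfY_leaf[simp]: "wf_tree_Y A Y (leaf x) \<longleftrightarrow> x \<in> Y" by (simp add: leaf_def)

locale hsim =
  fixes A :: "('q, 'm, 'a, 'c) hm" and \<Delta> :: "'d ralph" and g :: "'d rtree \<Rightarrow> 'a rtree"
    and tr :: "'d \<Rightarrow> mark \<Rightarrow> nat list \<Rightarrow> nat" and N :: nat and ot :: "nat \<Rightarrow> 'a"
  assumes uA: "is_uTHM A" and finD: "finite (fst \<Delta>)" and trN: "\<And>a m cs. tr a m cs < N"
    and gwf: "\<And>t. wf_tree \<Delta> t \<Longrightarrow> wf_tree (hm_in A) (g t)"
    and gnodes: "\<And>t. wf_tree \<Delta> t \<Longrightarrow> nodes (g t) = nodes t"
    and glab: "\<And>t u. wf_tree \<Delta> t \<Longrightarrow> u \<in> nodes t \<Longrightarrow> lab (g t) u = ot (brun tr (\<lambda>p. if p = u then (UNIV, {}) else ({}, {})) t)"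
begin

definition MR :: nat where "MR = Max (insert 0 (snd \<Delta> ` fst \<Delta>))"
definition rk :: "'d \<Rightarrow> nat" where "rk d = snd \<Delta> d"
definition TABS :: "nat list set" where "TABS = {tab. length tab = N \<and> set tab \<subseteq> {..<N}}"
definition LS :: "nat list set" where "LS = {ss. length ss \<le> MR \<and> set ss \<subseteq> {..<N}}"
definition StB :: "'q bst set" where
  "StB = {D1 True, D1 False, U2} \<union> U1 ` {..<N} \<union> D2 ` TABS \<union> Sim ` hm_states A"
definition MemB :: "('a, 'm) bmem set" where
  "MemB = {Top} \<union> (\<lambda>(r, ss). Col r ss) ` (UNIV \<times> LS) \<union> (\<lambda>(r, tab, ss, i). Pas r tab ss i) ` (UNIV \<times> TABS \<times> LS \<times> {..MR})
     \<union> (\<lambda>(\<sigma>, m). Fin \<sigma> m) ` (fst (hm_in A) \<times> hm_mem A)"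

lemma rk_MR: "d \<in> fst \<Delta> \<Longrightarrow> rk d \<le> MR"
  unfolding rk_def MR_def using finD by (intro Max_ge) auto

lemma finite_TABS: "finite TABS"
  unfolding TABS_def by (rule finite_subset[OF _ finite_lists_length_eq[of "{..<N}" N]]) auto
lemma finite_LS: "finite LS"
  unfolding LS_def by (rule finite_subset[OF _ finite_lists_length_le[of "{..<N}" MR]]) auto
lemma finite_StB: "finite StB"
  using uA finite_TABS unfolding StB_def is_uTHM_def by auto
lemma finite_MemB: "finite MemB"
  using uA finite_TABS finite_LS unfolding MemB_def is_uTHM_def by auto

lemma Col_MemB[simp]: "Col r ss \<in> MemB \<longleftrightarrow> ss \<in> LS" by (auto simp: MemB_def)
lemma Pas_MemB[simp]: "Pas r tab ss i \<in> MemB \<longleftrightarrow> tab \<in> TABS \<and> ss \<in> LS \<and> i \<le> MR"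
proof
  assume "Pas r tab ss i \<in> MemB" then show "tab \<in> TABS \<and> ss \<in> LS \<and> i \<le> MR" by (auto simp: MemB_def)
next
  assume "tab \<in> TABS \<and> ss \<in> LS \<and> i \<le> MR"
  then have "Pas r tab ss i \<in> (\<lambda>(r, tab, ss, i). Pas r tab ss i) ` (UNIV \<times> TABS \<times> LS \<times> {..MR})"
    by (intro image_eqI[where x="(r, tab, ss, i)"]) auto
  then show "Pas r tab ss i \<in> MemB" unfolding MemB_def by blast
qed
lemma Fin_MemB[simp]: "Fin \<sigma> m \<in> MemB \<longleftrightarrow> \<sigma> \<in> fst (hm_in A) \<and> m \<in> hm_mem A" by (auto simp: MemB_def)
lemma Top_MemB[simp]: "Top \<in> MemB" by (auto simp: MemB_def)
lemma D1_StB[simp]: "D1 r \<in> StB" by (cases r) (auto simp: StB_def)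
lemma U1_StB[simp]: "U1 s \<in> StB \<longleftrightarrow> s < N" by (auto simp: StB_def)
lemma D2_StB[simp]: "D2 tab \<in> StB \<longleftrightarrow> tab \<in> TABS" by (auto simp: StB_def)
lemma U2_StB[simp]: "U2 \<in> StB" by (auto simp: StB_def)
lemma Sim_StB[simp]: "Sim q \<in> StB \<longleftrightarrow> q \<in> hm_states A" by (auto simp: StB_def)

definition simstep :: "'q \<Rightarrow> 'd \<Rightarrow> 'a \<Rightarrow> 'm \<Rightarrow> ('c + ('q bst \<times> ('a, 'm) bmem \<times> dir)) rtree option" where
  "simstep q d \<sigma> m = (if rk d = snd (hm_in A) \<sigma> then
     map_option (map_rtree (map_sum id (\<lambda>(q', m', dir). (Sim q', Fin \<sigma> m', dir)))) (hm_delta A q \<sigma> m) else None)"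

definition proc2 :: "bool \<Rightarrow> nat list \<Rightarrow> nat list \<Rightarrow> 'd \<Rightarrow> nat \<Rightarrow> ('c + ('q bst \<times> ('a, 'm) bmem \<times> dir)) rtree option" where
  "proc2 r tab ss d i = (if i < rk d then Some (leaf (D2 (childtab tr N tab d ss i), Pas r tab ss (Suc i), Dn (Suc i)))
     else (let \<sigma> = ot (tab ! tr d (UNIV, {}) ss) in
       if \<sigma> \<notin> fst (hm_in A) then None
       else if r then simstep (hm_init A) d \<sigma> (hm_top A)
       else Some (leaf (U2, Fin \<sigma> (hm_top A), Up))))"

definition proc1 :: "bool \<Rightarrow> 'd \<Rightarrow> nat list \<Rightarrow> ('c + ('q bst \<times> ('a, 'm) bmem \<times> dir)) rtree option" where
  "proc1 r d ss = (if length ss < rk d then Some (leaf (D1 False, Col r ss, Dn (Suc (length ss))))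
     else if rk d < length ss then None
     else if r then proc2 True [0..<N] ss d 0
     else Some (leaf (U1 (tr d ({}, {}) ss), Col r ss, Up)))"

fun bdelta0 :: "'q bst \<Rightarrow> 'd \<Rightarrow> ('a, 'm) bmem \<Rightarrow> ('c + ('q bst \<times> ('a, 'm) bmem \<times> dir)) rtree option" where
  "bdelta0 (D1 r) d Top = proc1 r d []"
| "bdelta0 (U1 s) d (Col r ss) = proc1 r d (ss @ [s])"
| "bdelta0 (D2 tab) d (Col r ss) = proc2 r tab ss d 0"
| "bdelta0 U2 d (Pas r tab ss i) = proc2 r tab ss d i"
| "bdelta0 (Sim q) d (Fin \<sigma> m) = simstep q d \<sigma> m"
| "bdelta0 _ _ _ = None"

definition bdelta :: "'q bst \<Rightarrow> 'd \<Rightarrow> ('a, 'm) bmem \<Rightarrow> ('c + ('q bst \<times> ('a, 'm) bmem \<times> dir)) rtree option" where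
  "bdelta q d m = (if d \<in> fst \<Delta> \<and> q \<in> StB \<and> m \<in> MemB then bdelta0 q d m else None)"

definition BM :: "('q bst, ('a, 'm) bmem, 'd, 'c) hm" where
  "BM = \<lparr>hm_states = StB, hm_mem = MemB, hm_top = Top, hm_in = \<Delta>, hm_outa = hm_outa A,
     hm_init = D1 True, hm_delta = bdelta\<rparr>"

lemma BM_simps[simp]: "hm_states BM = StB" "hm_mem BM = MemB" "hm_top BM = Top" "hm_in BM = \<Delta>"
  "hm_outa BM = hm_outa A" "hm_init BM = D1 True" "hm_delta BM = bdelta"
  by (simp_all add: BM_def)

definition OK :: "'d \<Rightarrow> ('c + ('q bst \<times> ('a, 'm) bmem \<times> dir)) rtree \<Rightarrow> bool" where
  "OK d r \<longleftrightarrow> wf_tree_Y (hm_outa A) (StB \<times> MemB \<times> UNIV) r \<and>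
     (\<forall>q' m' i. Inr (q', m', Dn i) \<in> set_rtree r \<longrightarrow> 1 \<le> i \<and> i \<le> rk d)"

lemma simstep_ok: "simstep q d \<sigma> m = Some r \<Longrightarrow> OK d r"
proof -
  assume h: "simstep q d \<sigma> m = Some r"
  then obtain r0 where r0: "hm_delta A q \<sigma> m = Some r0" "r = map_rtree (map_sum id (\<lambda>(q', m', dir). (Sim q', Fin \<sigma> m', dir))) r0"
    and rk: "rk d = snd (hm_in A) \<sigma>"
    by (auto simp: simstep_def split: if_splits)
  have P: "\<sigma> \<in> fst (hm_in A) \<and> wf_tree_Y (hm_outa A) (hm_states A \<times> hm_mem A \<times> UNIV) r0 \<and>
      (\<forall>q' m' i. Inr (q', m', Dn i) \<in> set_rtree r0 \<longrightarrow> 1 \<le> i \<and> i \<le> snd (hm_in A) \<sigma>)"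
    using uA r0(1) unfolding is_uTHM_def by blast
  show "OK d r" unfolding OK_def
  proof (intro conjI allI impI)
    show "wf_tree_Y (hm_outa A) (StB \<times> MemB \<times> UNIV) r" unfolding r0(2) using P by (auto intro!: wfY_map)
    fix q' m' i assume "Inr (q', m', Dn i) \<in> set_rtree r"
    then obtain x where x: "x \<in> set_rtree r0" "map_sum id (\<lambda>(q', m', dir). (Sim q', Fin \<sigma> m', dir)) x = Inr (q', m', Dn i)"
      unfolding r0(2) by (auto simp: rtree.set_map)
    then obtain a b where "x = Inr (a, b, Dn i)" using mapsum_Inr[OF x(2)] by auto
    then show "1 \<le> i" "i \<le> rk d" using P x rk by auto
  qed
qed

lemma TABS_childtab: "tab \<in> TABS \<Longrightarrow> childtab tr N tab d ss i \<in> TABS"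
proof -
  assume tab: "tab \<in> TABS"
  have "tab ! k < N" if "k < N" for k
  proof -
    have "tab ! k \<in> set tab" using tab that by (simp add: TABS_def)
    then show ?thesis using tab by (auto simp: TABS_def)
  qed
  then show ?thesis unfolding TABS_def childtab_def using trN by auto
qed

lemma proc2_ok:
  assumes "tab \<in> TABS" "ss \<in> LS" "d \<in> fst \<Delta>" "proc2 r tab ss d i = Some r'"
  shows "OK d r'"
proof (cases "i < rk d")
  case True
  then show ?thesis using assms rk_MR[OF assms(3)] TABS_childtab[OF assms(1)]
    by (auto simp: proc2_def OK_def)
next
  case False
  show ?thesis using assms(4) False uA simstep_ok unfolding is_uTHM_def
    by (auto simp: proc2_def OK_def Let_def split: if_splits)
qed

lemma proc1_ok:
  assumes "set ss \<subseteq> {..<N}" "d \<in> fst \<Delta>" "proc1 r d ss = Some r'"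
  shows "OK d r'"
proof -
  have "[0..<N] \<in> TABS" by (auto simp: TABS_def)
  moreover have "length ss \<le> rk d \<Longrightarrow> ss \<in> LS" using assms(1) rk_MR[OF assms(2)] by (simp add: LS_def)
  ultimately show ?thesis using assms proc2_ok[of "[0..<N]" ss d True 0 r'] rk_MR[OF assms(2)] trN
    by (auto simp: proc1_def OK_def LS_def split: if_splits)
qed

lemma bdelta_ok: "bdelta q d m = Some r \<Longrightarrow> OK d r"
proof -
  assume h: "bdelta q d m = Some r"
  then have in1: "d \<in> fst \<Delta>" "q \<in> StB" "m \<in> MemB" and h0: "bdelta0 q d m = Some r"
    by (auto simp: bdelta_def split: if_splits)
  show "OK d r"
  proof (cases q)
    case (D1 b) then show ?thesis using h0 in1 proc1_ok[of "[]" d b r] by (cases m) auto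
  next
    case (U1 s)
    then show ?thesis using h0 in1
    proof (cases m)
      case (Col b ss)
      then show ?thesis using h0 in1 U1 proc1_ok[of "ss @ [s]" d b r] by (auto simp: LS_def)
    qed auto
  next
    case (D2 tab)
    then show ?thesis using h0 in1
    proof (cases m)
      case (Col b ss)
      then show ?thesis using h0 in1 D2 proc2_ok[of tab ss d b 0 r] by auto
    qed auto
  next
    case U2
    then show ?thesis using h0 in1
    proof (cases m)
      case (Pas b tab ss i)
      then show ?thesis using h0 in1 U2 proc2_ok[of tab ss d b i r] by auto
    qed auto
  next
    case (Sim q')
    then show ?thesis using h0 in1
    proof (cases m)
      case (Fin \<sigma> m')
      then show ?thesis using h0 in1 Sim simstep_ok[of q' d \<sigma> m' r] by auto
    qed auto
  qed
qed

lemma uTHM_BM: "is_uTHM BM"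
  unfolding is_uTHM_def
proof (intro conjI allI impI)
  show "finite (hm_states BM)" "finite (hm_mem BM)" using finite_StB finite_MemB by simp_all
  show "hm_top BM \<in> hm_mem BM" "hm_init BM \<in> hm_states BM" by simp_all
  show "finite (fst (hm_in BM))" using finD by simp
  show "finite (fst (hm_outa BM))" using uA by (simp add: is_uTHM_def)
  fix q \<sigma> m r assume h: "hm_delta BM q \<sigma> m = Some r"
  then have "bdelta q \<sigma> m = Some r" by simp
  then have "\<sigma> \<in> fst \<Delta> \<and> q \<in> StB \<and> m \<in> MemB" and ok: "OK \<sigma> r"
    by (auto simp: bdelta_def bdelta_ok split: if_splits)
  then show "q \<in> hm_states BM" "\<sigma> \<in> fst (hm_in BM)" "m \<in> hm_mem BM"
    "wf_tree_Y (hm_outa BM) (hm_states BM \<times> hm_mem BM \<times> UNIV) r"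
    by (auto simp: OK_def)
  fix q' m' i assume "Inr (q', m', Dn i) \<in> set_rtree r"
  then show "1 \<le> i" "i \<le> snd (hm_in BM) \<sigma>" using ok by (auto simp: OK_def rk_def)
qed

end




definition nonSim :: "'q bst \<Rightarrow> bool" where
  "nonSim q = (case q of Sim _ \<Rightarrow> False | _ \<Rightarrow> True)"

lemma nonSim_simps[simp]: "nonSim (D1 r)" "nonSim (U1 s)" "nonSim (D2 tab)" "nonSim U2" "\<not> nonSim (Sim q)"
  by (simp_all add: nonSim_def)

definition sub1 :: "nat list \<Rightarrow> nat list \<Rightarrow> bool" where
  "sub1 v w \<longleftrightarrow> (\<exists>w'. w = v @ w' \<and> w' \<noteq> [])"

lemma move_Dn: "v @ [i] \<in> nodes t \<Longrightarrow> move t v (Dn i) = Some (v @ [i])" by simp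
lemma move_Up: "v \<noteq> [] \<Longrightarrow> move t v Up = Some (butlast v)" by simp

lemma step_leaf:
  assumes "v \<in> nodes t" "hm_delta X q (lab t v) (\<mu> v) = Some (leaf (q', m', dir))" "move t v dir = Some v'"
  shows "step X t (v, q, \<mu>) = Some (leaf (v', q', \<mu>(v := m')))"
  using assms by (simp add: leaf_def)

context hsim
begin

definition dstep :: "'d rtree \<Rightarrow> ('q bst, ('a, 'm) bmem) conf \<Rightarrow> ('q bst, ('a, 'm) bmem) conf \<Rightarrow> bool" where
  "dstep t C C' \<longleftrightarrow> step BM t C = Some (leaf C') \<and> nonSim (fst (snd C)) \<and> nonSim (fst (snd C'))"

lemma dstep_sstep: "dstep t C C' \<Longrightarrow> sstep BM t C C'"
  by (simp add: dstep_def sstep_def leaf_def)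

lemma dstar_sstar: "(dstep t)\<^sup>*\<^sup>* C C' \<Longrightarrow> (sstep BM t)\<^sup>*\<^sup>* C C'"
  by (induction rule: rtranclp_induct) (auto intro: rtranclp.rtrancl_into_rtrancl dstep_sstep)

lemma sv_less: "sv tr t u < N"
  unfolding sv_def using brun_in[of tr "{..<N}"] trN by auto

lemma svs_LS:
  assumes "wf_tree \<Delta> t" "v \<in> nodes t"
  shows "svs tr t v \<in> LS" "length (svs tr t v) = rk (lab t v)" "lab t v \<in> fst \<Delta>"
proof -
  show "lab t v \<in> fst \<Delta>" by (rule wf_lab[OF assms])
  show l: "length (svs tr t v) = rk (lab t v)" using wf_nch[OF assms] by (simp add: svs_def rk_def)
  show "svs tr t v \<in> LS" using l rk_MR[OF wf_lab[OF assms]] sv_less by (auto simp: LS_def svs_def)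
qed

lemma svs_nth: "k < nch t v \<Longrightarrow> svs tr t v ! k = sv tr t (v @ [Suc k])"
  by (simp add: svs_def)

lemma take_Suc_svs: "k < length S \<Longrightarrow> take k S @ [S ! k] = take (Suc k) S"
  by (simp add: take_Suc_conv_app_nth)

lemma pass1:
  assumes wf: "wf_tree \<Delta> t"
  shows "v \<in> nodes t \<Longrightarrow> (\<forall>w. (\<exists>w'. w = v @ w') \<longrightarrow> w \<in> nodes t \<longrightarrow> \<mu> w = Top) \<Longrightarrow>
    \<exists>q' \<mu>'. (dstep t)\<^sup>*\<^sup>* (v, D1 (v = []), \<mu>) (v, q', \<mu>') \<and> nonSim q' \<and>
      bdelta q' (lab t v) (\<mu>' v) = proc1 (v = []) (lab t v) (svs tr t v) \<and>
      (\<forall>w. w \<noteq> v \<longrightarrow> \<mu>' w = (if sub1 v w \<and> w \<in> nodes t then Col False (svs tr t w) else \<mu> w))"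
proof (induction "size (subt t v)" arbitrary: v \<mu> rule: less_induct)
  case less
  note v = less.prems(1) and top = less.prems(2)
  define r where "r = (v = [])"
  define d where "d = lab t v"
  define S where "S = svs tr t v"
  define n where "n = nch t v"
  have SLS: "S \<in> LS" and lS: "length S = rk d" and dD: "d \<in> fst \<Delta>"
    using svs_LS[OF wf v] by (simp_all add: S_def d_def)
  have rkn: "rk d = n" using wf_nch[OF wf v] by (simp add: rk_def n_def d_def)
  have loop: "k \<le> n \<Longrightarrow> \<exists>q' \<mu>'. (dstep t)\<^sup>*\<^sup>* (v, D1 r, \<mu>) (v, q', \<mu>') \<and> nonSim q' \<and>
      bdelta q' d (\<mu>' v) = proc1 r d (take k S) \<and>
      (\<forall>w. w \<noteq> v \<longrightarrow> \<mu>' w = (if (\<exists>j<k. \<exists>w'. w = v @ Suc j # w') \<and> w \<in> nodes t then Col False (svs tr t w) else \<mu> w))" for k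
  proof (induction k)
    case 0
    have "\<mu> v = Top" using top v by auto
    then have "bdelta (D1 r) d (\<mu> v) = proc1 r d (take 0 S)" using dD by (simp add: bdelta_def)
    then show ?case by (intro exI[of _ "D1 r"] exI[of _ \<mu>]) auto
  next
    case (Suc k)
    then obtain q' \<mu>' where IH: "(dstep t)\<^sup>*\<^sup>* (v, D1 r, \<mu>) (v, q', \<mu>')" "nonSim q'"
      "bdelta q' d (\<mu>' v) = proc1 r d (take k S)"
      "\<forall>w. w \<noteq> v \<longrightarrow> \<mu>' w = (if (\<exists>j<k. \<exists>w'. w = v @ Suc j # w') \<and> w \<in> nodes t then Col False (svs tr t w) else \<mu> w)"
      by auto
    have kn: "k < n" using Suc.prems by simp
    define c where "c = v @ [Suc k]"
    have c: "c \<in> nodes t" using nodes_child[OF v] kn unfolding c_def n_def by simp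
    have p1: "proc1 r d (take k S) = Some (leaf (D1 False, Col r (take k S), Dn (Suc k)))"
      using kn lS rkn by (simp add: proc1_def)
    define \<mu>1 where "\<mu>1 = \<mu>'(v := Col r (take k S))"
    have mv: "move t v (Dn (Suc k)) = Some c" using c by (simp add: c_def)
    have st1: "step BM t (v, q', \<mu>') = Some (leaf (c, D1 False, \<mu>1))"
      unfolding \<mu>1_def
      by (rule step_leaf[OF v _ mv]) (use IH(3) p1 in \<open>simp add: d_def\<close>)
    have ds1: "dstep t (v, q', \<mu>') (c, D1 False, \<mu>1)" using st1 IH(2) by (simp add: dstep_def)
    have smaller: "size (subt t c) < size (subt t v)"
    proof -
      obtain a ts where sv: "subt t v = Node a ts" by (cases "subt t v")
      have "k < length ts" using kn sv by (simp add: n_def nch_def)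
      then have "ts ! k \<in> set ts" by (rule nth_mem)
      then have "size (ts ! k) \<le> size_list size ts" by (rule size_list_estimation') simp
      then have "size (ts ! k) < size (Node a ts)" by simp
      moreover have "subt t c = ts ! k" using subt_child[of t v k] sv by (simp add: c_def)
      ultimately show ?thesis using sv by simp
    qed
    have cnil: "(c = []) = False" by (simp add: c_def)
    have top1: "\<forall>w. (\<exists>w'. w = c @ w') \<longrightarrow> w \<in> nodes t \<longrightarrow> \<mu>1 w = Top"
    proof (intro allI impI)
      fix w assume w: "\<exists>w'. w = c @ w'" "w \<in> nodes t"
      then obtain w' where w': "w = v @ Suc k # w'" by (auto simp: c_def)
      have wv: "w \<noteq> v" using w' by simp
      have nc: "\<not> ((\<exists>j<k. \<exists>w''. w = v @ Suc j # w'') \<and> w \<in> nodes t)" using w' by auto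
      have e: "\<mu>' w = (if (\<exists>j<k. \<exists>w'. w = v @ Suc j # w') \<and> w \<in> nodes t then Col False (svs tr t w) else \<mu> w)"
        using IH(4) wv by blast
      have "\<mu>' w = \<mu> w" unfolding e using nc by (simp only: if_False)
      then have "\<mu>1 w = \<mu> w" using \<open>w \<noteq> v\<close> by (simp add: \<mu>1_def)
      then show "\<mu>1 w = Top" using top w' w(2) by auto
    qed
    obtain q'' \<mu>'' where C: "(dstep t)\<^sup>*\<^sup>* (c, D1 False, \<mu>1) (c, q'', \<mu>'')" "nonSim q''"
      "bdelta q'' (lab t c) (\<mu>'' c) = proc1 False (lab t c) (svs tr t c)"
      "\<forall>w. w \<noteq> c \<longrightarrow> \<mu>'' w = (if sub1 c w \<and> w \<in> nodes t then Col False (svs tr t w) else \<mu>1 w)"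
      using less.hyps[OF smaller c top1] unfolding cnil by blast
    have lc: "length (svs tr t c) = rk (lab t c)" using svs_LS[OF wf c] by simp
    have svc: "tr (lab t c) ({}, {}) (svs tr t c) = S ! k"
      using sv_unfold[of tr t c] svs_nth[of k t v] kn by (simp add: S_def c_def n_def)
    have p2: "proc1 False (lab t c) (svs tr t c) = Some (leaf (U1 (S ! k), Col False (svs tr t c), Up))"
      using lc svc by (simp add: proc1_def)
    define \<mu>2 where "\<mu>2 = \<mu>''(c := Col False (svs tr t c))"
    have mv2: "move t c Up = Some v" by (simp add: c_def)
    have st2: "step BM t (c, q'', \<mu>'') = Some (leaf (v, U1 (S ! k), \<mu>2))"
      unfolding \<mu>2_def
      by (rule step_leaf[OF c _ mv2]) (use C(3) p2 in simp)
    have ds2: "dstep t (c, q'', \<mu>'') (v, U1 (S ! k), \<mu>2)" using st2 C(2) by (simp add: dstep_def)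
    have m2v: "\<mu>2 v = Col r (take k S)"
    proof -
      have "v \<noteq> c" "\<not> sub1 c v" by (auto simp: c_def sub1_def)
      then show ?thesis using C(4) by (simp add: \<mu>2_def \<mu>1_def)
    qed
    have Sk: "S ! k < N"
    proof -
      have "S ! k \<in> set S" using kn lS rkn by simp
      then show ?thesis using SLS by (auto simp: LS_def)
    qed
    have tk: "take k S \<in> LS" using SLS by (auto simp: LS_def dest: in_set_takeD)
    have b3: "bdelta (U1 (S ! k)) d (\<mu>2 v) = proc1 r d (take (Suc k) S)"
      using m2v Sk tk dD kn lS rkn by (simp add: bdelta_def take_Suc_svs)
    have mem: "\<forall>w. w \<noteq> v \<longrightarrow> \<mu>2 w = (if (\<exists>j<Suc k. \<exists>w'. w = v @ Suc j # w') \<and> w \<in> nodes t then Col False (svs tr t w) else \<mu> w)"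
    proof (intro allI impI)
      fix w assume wv: "w \<noteq> v"
      show "\<mu>2 w = (if (\<exists>j<Suc k. \<exists>w'. w = v @ Suc j # w') \<and> w \<in> nodes t then Col False (svs tr t w) else \<mu> w)"
      proof (cases "\<exists>w'. w = c @ w'")
        case True
        then obtain w' where w': "w = v @ Suc k # w'" by (auto simp: c_def)
        have ex: "(\<exists>j<Suc k. \<exists>w'. w = v @ Suc j # w')" using w' by blast
        show ?thesis
        proof (cases "w' = []")
          case True then show ?thesis using w' c by (simp add: \<mu>2_def c_def)
        next
          case False
          then have "w \<noteq> c" "sub1 c w" using w' by (auto simp: c_def sub1_def)
          then show ?thesis using C(4) ex IH(4) wv by (cases "w \<in> nodes t") (simp_all add: \<mu>2_def \<mu>1_def)
        qed
      next
        case False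
        then have "w \<noteq> c" "\<not> sub1 c w" by (auto simp: sub1_def)
        then have "\<mu>2 w = \<mu>' w" using C(4) wv by (simp add: \<mu>2_def \<mu>1_def)
        moreover have "(\<exists>j<Suc k. \<exists>w'. w = v @ Suc j # w') \<longleftrightarrow> (\<exists>j<k. \<exists>w'. w = v @ Suc j # w')"
          using False by (auto simp: c_def less_Suc_eq)
        ultimately show ?thesis using IH(4) wv by simp
      qed
    qed
    have "(dstep t)\<^sup>*\<^sup>* (v, D1 r, \<mu>) (v, U1 (S ! k), \<mu>2)"
      using IH(1) ds1 C(1) ds2 by (meson rtranclp.rtrancl_into_rtrancl rtranclp_trans r_into_rtranclp)
    then show ?case using b3 mem by (intro exI[of _ "U1 (S ! k)"] exI[of _ \<mu>2]) simp
  qed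
  obtain q' \<mu>' where L: "(dstep t)\<^sup>*\<^sup>* (v, D1 r, \<mu>) (v, q', \<mu>')" "nonSim q'"
    "bdelta q' d (\<mu>' v) = proc1 r d (take n S)"
    "\<forall>w. w \<noteq> v \<longrightarrow> \<mu>' w = (if (\<exists>j<n. \<exists>w'. w = v @ Suc j # w') \<and> w \<in> nodes t then Col False (svs tr t w) else \<mu> w)"
    using loop[of n] by auto
  have tn: "take n S = S" using lS rkn by simp
  have sub: "(\<exists>j<n. \<exists>w'. w = v @ Suc j # w') \<and> w \<in> nodes t \<longleftrightarrow> sub1 v w \<and> w \<in> nodes t" for w
  proof
    assume "(\<exists>j<n. \<exists>w'. w = v @ Suc j # w') \<and> w \<in> nodes t"
    then show "sub1 v w \<and> w \<in> nodes t" by (auto simp: sub1_def)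
  next
    assume h: "sub1 v w \<and> w \<in> nodes t"
    then obtain i w' where w: "w = v @ i # w'" by (auto simp: sub1_def neq_Nil_conv)
    then have "v @ [i] \<in> nodes t" using h nodes_prefix[of "v @ [i]" w' t] by simp
    then have "1 \<le> i" "i \<le> n" using nodes_child[OF v] by (auto simp: n_def)
    then show "(\<exists>j<n. \<exists>w'. w = v @ Suc j # w') \<and> w \<in> nodes t" using w h by (cases i) auto
  qed
  show ?case using L tn sub unfolding r_def d_def S_def by (intro exI[of _ q'] exI[of _ \<mu>']) simp
qed

lemma tabf_TABS: "tabf tr N t u \<in> TABS"
  unfolding TABS_def tabf_def using ctxf_less[of tr N] trN by auto

lemma sel_lab:
  assumes "wf_tree \<Delta> t" "c \<in> nodes t"
  shows "ot (tabf tr N t c ! tr (lab t c) (UNIV, {}) (svs tr t c)) = lab (g t) c"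
proof -
  have "tabf tr N t c ! tr (lab t c) (UNIV, {}) (svs tr t c) = ctxf tr t c (tr (lab t c) (UNIV, {}) (svs tr t c))"
    by (rule tabf_nth) (rule trN)
  then show ?thesis using glab[OF assms] sel_brun[OF assms(2), of tr] by simp
qed

lemma lab_g_in:
  assumes "wf_tree \<Delta> t" "c \<in> nodes t"
  shows "lab (g t) c \<in> fst (hm_in A)"
  using wf_lab[OF gwf[OF assms(1)]] gnodes[OF assms(1)] assms(2) by simp

lemma pass2:
  assumes wf: "wf_tree \<Delta> t"
  shows "v \<in> nodes t \<Longrightarrow> nonSim q \<Longrightarrow> bdelta q (lab t v) (\<mu> v) = proc2 (v = []) (tabf tr N t v) (svs tr t v) (lab t v) 0 \<Longrightarrow>
    (\<forall>w. sub1 v w \<longrightarrow> w \<in> nodes t \<longrightarrow> \<mu> w = Col False (svs tr t w)) \<Longrightarrow>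
    \<exists>q' \<mu>'. (dstep t)\<^sup>*\<^sup>* (v, q, \<mu>) (v, q', \<mu>') \<and> nonSim q' \<and>
      bdelta q' (lab t v) (\<mu>' v) = proc2 (v = []) (tabf tr N t v) (svs tr t v) (lab t v) (nch t v) \<and>
      (\<forall>w. w \<noteq> v \<longrightarrow> \<mu>' w = (if sub1 v w \<and> w \<in> nodes t then Fin (lab (g t) w) (hm_top A) else \<mu> w))"
proof (induction "size (subt t v)" arbitrary: v q \<mu> rule: less_induct)
  case less
  note v = less.prems(1) and nq = less.prems(2) and b0 = less.prems(3) and col = less.prems(4)
  define r where "r = (v = [])"
  define d where "d = lab t v"
  define S where "S = svs tr t v"
  define T where "T = tabf tr N t v"
  define n where "n = nch t v"
  have SLS: "S \<in> LS" and lS: "length S = rk d" and dD: "d \<in> fst \<Delta>"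
    using svs_LS[OF wf v] by (simp_all add: S_def d_def)
  have rkn: "rk d = n" using wf_nch[OF wf v] by (simp add: rk_def n_def d_def)
  have TT: "T \<in> TABS" by (simp add: T_def tabf_TABS)
  have loop: "k \<le> n \<Longrightarrow> \<exists>q' \<mu>'. (dstep t)\<^sup>*\<^sup>* (v, q, \<mu>) (v, q', \<mu>') \<and> nonSim q' \<and>
      bdelta q' d (\<mu>' v) = proc2 r T S d k \<and>
      (\<forall>w. w \<noteq> v \<longrightarrow> \<mu>' w = (if (\<exists>j<k. \<exists>w'. w = v @ Suc j # w') \<and> w \<in> nodes t then Fin (lab (g t) w) (hm_top A) else \<mu> w))" for k
  proof (induction k)
    case 0
    show ?case using b0 nq by (intro exI[of _ q] exI[of _ \<mu>]) (simp add: r_def d_def S_def T_def)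
  next
    case (Suc k)
    then obtain q' \<mu>' where IH: "(dstep t)\<^sup>*\<^sup>* (v, q, \<mu>) (v, q', \<mu>')" "nonSim q'"
      "bdelta q' d (\<mu>' v) = proc2 r T S d k"
      "\<forall>w. w \<noteq> v \<longrightarrow> \<mu>' w = (if (\<exists>j<k. \<exists>w'. w = v @ Suc j # w') \<and> w \<in> nodes t then Fin (lab (g t) w) (hm_top A) else \<mu> w)"
      by auto
    have kn: "k < n" using Suc.prems by simp
    define c where "c = v @ [Suc k]"
    have c: "c \<in> nodes t" using nodes_child[OF v] kn unfolding c_def n_def by simp
    have ct: "childtab tr N T d S k = tabf tr N t c"
      unfolding T_def d_def S_def c_def by (rule childtab_ok[OF trN c[unfolded c_def]])
    have p1: "proc2 r T S d k = Some (leaf (D2 (tabf tr N t c), Pas r T S (Suc k), Dn (Suc k)))"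
      using kn rkn ct by (simp add: proc2_def)
    define \<mu>1 where "\<mu>1 = \<mu>'(v := Pas r T S (Suc k))"
    have mv: "move t v (Dn (Suc k)) = Some c" using c by (simp add: c_def)
    have st1: "step BM t (v, q', \<mu>') = Some (leaf (c, D2 (tabf tr N t c), \<mu>1))"
      unfolding \<mu>1_def
      by (rule step_leaf[OF v _ mv]) (use IH(3) p1 in \<open>simp add: d_def\<close>)
    have ds1: "dstep t (v, q', \<mu>') (c, D2 (tabf tr N t c), \<mu>1)" using st1 IH(2) by (simp add: dstep_def)
    have smaller: "size (subt t c) < size (subt t v)"
    proof -
      obtain a ts where sv: "subt t v = Node a ts" by (cases "subt t v")
      have "k < length ts" using kn sv by (simp add: n_def nch_def)
      then have "ts ! k \<in> set ts" by (rule nth_mem)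
      then have "size (ts ! k) \<le> size_list size ts" by (rule size_list_estimation') simp
      then have "size (ts ! k) < size (Node a ts)" by simp
      moreover have "subt t c = ts ! k" using subt_child[of t v k] sv by (simp add: c_def)
      ultimately show ?thesis using sv by simp
    qed
    have cnil: "(c = []) = False" by (simp add: c_def)
    have old: "\<mu>1 w = \<mu> w" if hw: "\<exists>w'. w = c @ w'" for w
    proof -
      obtain w' where w': "w = v @ Suc k # w'" using hw by (auto simp: c_def)
      have wv: "w \<noteq> v" using w' by simp
      have nc: "\<not> ((\<exists>j<k. \<exists>w''. w = v @ Suc j # w'') \<and> w \<in> nodes t)" using w' by auto
      have e: "\<mu>' w = (if (\<exists>j<k. \<exists>w'. w = v @ Suc j # w') \<and> w \<in> nodes t then Fin (lab (g t) w) (hm_top A) else \<mu> w)"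
        using IH(4) wv by blast
      have "\<mu>' w = \<mu> w" unfolding e using nc by (simp only: if_False)
      then show "\<mu>1 w = \<mu> w" using wv by (simp add: \<mu>1_def)
    qed
    have mc: "\<mu>1 c = Col False (svs tr t c)"
      using old[of c] col c by (auto simp: c_def sub1_def)
    have b1: "bdelta (D2 (tabf tr N t c)) (lab t c) (\<mu>1 c) = proc2 (c = []) (tabf tr N t c) (svs tr t c) (lab t c) 0"
      using mc svs_LS[OF wf c] tabf_TABS cnil by (simp add: bdelta_def)
    have col1: "\<forall>w. sub1 c w \<longrightarrow> w \<in> nodes t \<longrightarrow> \<mu>1 w = Col False (svs tr t w)"
    proof (intro allI impI)
      fix w assume w: "sub1 c w" "w \<in> nodes t"
      then have "\<mu>1 w = \<mu> w" by (intro old) (auto simp: sub1_def)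
      moreover have "sub1 v w" using w by (auto simp: sub1_def c_def)
      ultimately show "\<mu>1 w = Col False (svs tr t w)" using col w by simp
    qed
    obtain q'' \<mu>'' where C: "(dstep t)\<^sup>*\<^sup>* (c, D2 (tabf tr N t c), \<mu>1) (c, q'', \<mu>'')" "nonSim q''"
      "bdelta q'' (lab t c) (\<mu>'' c) = proc2 (c = []) (tabf tr N t c) (svs tr t c) (lab t c) (nch t c)"
      "\<forall>w. w \<noteq> c \<longrightarrow> \<mu>'' w = (if sub1 c w \<and> w \<in> nodes t then Fin (lab (g t) w) (hm_top A) else \<mu>1 w)"
      using less.hyps[OF smaller c _ b1 col1] by auto
    have nc: "\<not> nch t c < rk (lab t c)" using wf_nch[OF wf c] by (simp add: rk_def)
    have p2: "proc2 (c = []) (tabf tr N t c) (svs tr t c) (lab t c) (nch t c) = Some (leaf (U2, Fin (lab (g t) c) (hm_top A), Up))"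
      using nc sel_lab[OF wf c] lab_g_in[OF wf c] cnil by (simp add: proc2_def Let_def)
    define \<mu>2 where "\<mu>2 = \<mu>''(c := Fin (lab (g t) c) (hm_top A))"
    have mv2: "move t c Up = Some v" by (simp add: c_def)
    have st2: "step BM t (c, q'', \<mu>'') = Some (leaf (v, U2, \<mu>2))"
      unfolding \<mu>2_def
      by (rule step_leaf[OF c _ mv2]) (use C(3) p2 in simp)
    have ds2: "dstep t (c, q'', \<mu>'') (v, U2, \<mu>2)" using st2 C(2) by (simp add: dstep_def)
    have m2v: "\<mu>2 v = Pas r T S (Suc k)"
    proof -
      have "v \<noteq> c" "\<not> sub1 c v" by (auto simp: c_def sub1_def)
      then show ?thesis using C(4) by (simp add: \<mu>2_def \<mu>1_def)
    qed
    have b3: "bdelta U2 d (\<mu>2 v) = proc2 r T S d (Suc k)"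
      using m2v TT SLS dD kn rkn rk_MR[OF dD] by (simp add: bdelta_def)
    have mem: "\<forall>w. w \<noteq> v \<longrightarrow> \<mu>2 w = (if (\<exists>j<Suc k. \<exists>w'. w = v @ Suc j # w') \<and> w \<in> nodes t then Fin (lab (g t) w) (hm_top A) else \<mu> w)"
    proof (intro allI impI)
      fix w assume wv: "w \<noteq> v"
      show "\<mu>2 w = (if (\<exists>j<Suc k. \<exists>w'. w = v @ Suc j # w') \<and> w \<in> nodes t then Fin (lab (g t) w) (hm_top A) else \<mu> w)"
      proof (cases "\<exists>w'. w = c @ w'")
        case True
        then obtain w' where w': "w = v @ Suc k # w'" by (auto simp: c_def)
        have ex: "(\<exists>j<Suc k. \<exists>w'. w = v @ Suc j # w')" using w' by blast
        show ?thesis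
        proof (cases "w' = []")
          case True then show ?thesis using w' c by (simp add: \<mu>2_def c_def)
        next
          case False
          then have "w \<noteq> c" "sub1 c w" using w' by (auto simp: c_def sub1_def)
          then show ?thesis using C(4) ex old[OF \<open>\<exists>w'. w = c @ w'\<close>] by (cases "w \<in> nodes t") (simp_all add: \<mu>2_def)
        qed
      next
        case False
        then have "w \<noteq> c" "\<not> sub1 c w" by (auto simp: sub1_def)
        then have "\<mu>2 w = \<mu>' w" using C(4) wv by (simp add: \<mu>2_def \<mu>1_def)
        moreover have "(\<exists>j<Suc k. \<exists>w'. w = v @ Suc j # w') \<longleftrightarrow> (\<exists>j<k. \<exists>w'. w = v @ Suc j # w')"
          using False by (auto simp: c_def less_Suc_eq)
        ultimately show ?thesis using IH(4) wv by simp
      qed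
    qed
    have "(dstep t)\<^sup>*\<^sup>* (v, q, \<mu>) (v, U2, \<mu>2)"
      using IH(1) ds1 C(1) ds2 by (meson rtranclp.rtrancl_into_rtrancl rtranclp_trans r_into_rtranclp)
    then show ?case using b3 mem by (intro exI[of _ U2] exI[of _ \<mu>2]) simp
  qed
  obtain q' \<mu>' where L: "(dstep t)\<^sup>*\<^sup>* (v, q, \<mu>) (v, q', \<mu>')" "nonSim q'"
    "bdelta q' d (\<mu>' v) = proc2 r T S d n"
    "\<forall>w. w \<noteq> v \<longrightarrow> \<mu>' w = (if (\<exists>j<n. \<exists>w'. w = v @ Suc j # w') \<and> w \<in> nodes t then Fin (lab (g t) w) (hm_top A) else \<mu> w)"
    using loop[of n] by auto
  have sub: "(\<exists>j<n. \<exists>w'. w = v @ Suc j # w') \<and> w \<in> nodes t \<longleftrightarrow> sub1 v w \<and> w \<in> nodes t" for w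
  proof
    assume "(\<exists>j<n. \<exists>w'. w = v @ Suc j # w') \<and> w \<in> nodes t"
    then show "sub1 v w \<and> w \<in> nodes t" by (auto simp: sub1_def)
  next
    assume h: "sub1 v w \<and> w \<in> nodes t"
    then obtain i w' where w: "w = v @ i # w'" by (auto simp: sub1_def neq_Nil_conv)
    then have "v @ [i] \<in> nodes t" using h nodes_prefix[of "v @ [i]" w' t] by simp
    then have "1 \<le> i" "i \<le> n" using nodes_child[OF v] by (auto simp: n_def)
    then show "(\<exists>j<n. \<exists>w'. w = v @ Suc j # w') \<and> w \<in> nodes t" using w h by (cases i) auto
  qed
  show ?case using L sub unfolding r_def d_def S_def T_def n_def by (intro exI[of _ q'] exI[of _ \<mu>']) simp
qed

end




lemma evalC_same_step:
  assumes "step X t C = step X t C'"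
  shows "evalC X t C s \<longleftrightarrow> evalC X t C' s"
proof
  assume "evalC X t C s" then show "evalC X t C' s"
    by cases (auto intro: evalC_step simp: assms)
next
  assume "evalC X t C' s" then show "evalC X t C s"
    by cases (auto intro: evalC_step simp: assms[symmetric])
qed

lemma move_nodes: "nodes t = nodes t' \<Longrightarrow> move t u d = move t' u d"
  by (cases d) simp_all

context hsim
begin

lemma prepass:
  assumes wf: "wf_tree \<Delta> t"
  shows "\<exists>q2 \<mu>2. (dstep t)\<^sup>*\<^sup>* (init_conf BM) ([], q2, \<mu>2) \<and> nonSim q2 \<and>
    bdelta q2 (lab t []) (\<mu>2 []) = bdelta (Sim (hm_init A)) (lab t []) (Fin (lab (g t) []) (hm_top A)) \<and>
    (\<forall>w. w \<noteq> [] \<longrightarrow> w \<in> nodes t \<longrightarrow> \<mu>2 w = Fin (lab (g t) w) (hm_top A))"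
proof -
  have r: "[] \<in> nodes t" by simp
  obtain q1 \<mu>1 where P1: "(dstep t)\<^sup>*\<^sup>* ([], D1 True, \<lambda>_. Top) ([], q1, \<mu>1)" "nonSim q1"
    "bdelta q1 (lab t []) (\<mu>1 []) = proc1 True (lab t []) (svs tr t [])"
    "\<forall>w. w \<noteq> [] \<longrightarrow> \<mu>1 w = (if sub1 [] w \<and> w \<in> nodes t then Col False (svs tr t w) else Top)"
    using pass1[OF wf r, of "\<lambda>_. Top"] by auto
  have l0: "length (svs tr t []) = rk (lab t [])" using svs_LS[OF wf r] by simp
  have p1: "proc1 True (lab t []) (svs tr t []) = proc2 True (tabf tr N t []) (svs tr t []) (lab t []) 0"
    using l0 by (simp add: proc1_def tabf_root)
  have col: "\<forall>w. sub1 [] w \<longrightarrow> w \<in> nodes t \<longrightarrow> \<mu>1 w = Col False (svs tr t w)"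
    using P1(4) by (auto simp: sub1_def)
  obtain q2 \<mu>2 where P2: "(dstep t)\<^sup>*\<^sup>* ([], q1, \<mu>1) ([], q2, \<mu>2)" "nonSim q2"
    "bdelta q2 (lab t []) (\<mu>2 []) = proc2 True (tabf tr N t []) (svs tr t []) (lab t []) (nch t [])"
    "\<forall>w. w \<noteq> [] \<longrightarrow> \<mu>2 w = (if sub1 [] w \<and> w \<in> nodes t then Fin (lab (g t) w) (hm_top A) else \<mu>1 w)"
  proof -
    have b1: "bdelta q1 (lab t []) (\<mu>1 []) = proc2 ([] = []) (tabf tr N t []) (svs tr t []) (lab t []) 0"
      using P1(3) p1 by simp
    show ?thesis using pass2[OF wf r P1(2) b1 col] that by auto
  qed
  have nc: "\<not> nch t [] < rk (lab t [])" using wf_nch[OF wf r] by (simp add: rk_def)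
  have p2: "proc2 True (tabf tr N t []) (svs tr t []) (lab t []) (nch t []) = simstep (hm_init A) (lab t []) (lab (g t) []) (hm_top A)"
    using nc sel_lab[OF wf r] lab_g_in[OF wf r] by (simp add: proc2_def Let_def)
  have inA: "hm_init A \<in> hm_states A" "hm_top A \<in> hm_mem A" using uA by (auto simp: is_uTHM_def)
  have b: "bdelta (Sim (hm_init A)) (lab t []) (Fin (lab (g t) []) (hm_top A)) = simstep (hm_init A) (lab t []) (lab (g t) []) (hm_top A)"
    using inA lab_g_in[OF wf r] wf_lab[OF wf r] by (simp add: bdelta_def)
  have star: "(dstep t)\<^sup>*\<^sup>* (init_conf BM) ([], q2, \<mu>2)"
    using P1(1) P2(1) by (simp add: init_conf_def)
  show ?thesis
    using star P2(2,3,4) p2 b by (intro exI[of _ q2] exI[of _ \<mu>2]) (auto simp: sub1_def neq_Nil_conv)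
qed

lemma bdelta_Sim:
  assumes "d \<in> fst \<Delta>" "\<sigma> \<in> fst (hm_in A)"
  shows "bdelta (Sim q) d (Fin \<sigma> m) = simstep q d \<sigma> m"
proof (cases "q \<in> hm_states A \<and> m \<in> hm_mem A")
  case True then show ?thesis using assms by (simp add: bdelta_def)
next
  case False
  then have "hm_delta A q \<sigma> m = None" using uA unfolding is_uTHM_def by (meson not_Some_eq)
  then have "simstep q d \<sigma> m = None" by (simp add: simstep_def)
  then show ?thesis using False by (simp add: bdelta_def)
qed

definition SR :: "'d rtree \<Rightarrow> ('q bst, ('a, 'm) bmem) conf \<Rightarrow> ('q, 'm) conf \<Rightarrow> bool" where
  "SR t CB CA \<longleftrightarrow> fst CB = fst CA \<and> fst (snd CB) = Sim (fst (snd CA)) \<and>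
     (\<forall>w\<in>nodes t. snd (snd CB) w = Fin (lab (g t) w) (snd (snd CA) w))"

lemma SR_simrel:
  assumes wf: "wf_tree \<Delta> t"
  shows "simrel BM t A (g t) (SR t)"
  unfolding simrel_def
proof (intro allI impI)
  fix CB CA assume R: "SR t CB CA"
  obtain u q \<mu> where CA: "CA = (u, q, \<mu>)" by (cases CA) auto
  obtain \<mu>B where CB: "CB = (u, Sim q, \<mu>B)" using R CA by (cases CB) (auto simp: SR_def)
  have mB: "\<And>w. w \<in> nodes t \<Longrightarrow> \<mu>B w = Fin (lab (g t) w) (\<mu> w)" using R unfolding CA CB SR_def by auto
  have gn: "nodes (g t) = nodes t" by (rule gnodes[OF wf])
  let ?mf = "map_sum id (\<lambda>(q', m', dir). (Sim q', Fin (lab (g t) u) m', dir))"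
  show "rel_option (rel_rtree (rel_sum (=) (SR t))) (step BM t CB) (step A (g t) CA)"
  proof (cases "u \<in> nodes t")
    case False then show ?thesis unfolding CA CB using gn by simp
  next
    case True
    define d where "d = lab t u"
    define \<sigma> where "\<sigma> = lab (g t) u"
    have dD: "d \<in> fst \<Delta>" using wf_lab[OF wf True] by (simp add: d_def)
    have sS: "\<sigma> \<in> fst (hm_in A)" using lab_g_in[OF wf True] by (simp add: \<sigma>_def)
    have rkeq: "rk d = snd (hm_in A) \<sigma>"
    proof -
      have "rk d = nch t u" using wf_nch[OF wf True] by (simp add: rk_def d_def)
      also have "\<dots> = nch (g t) u" using nodes_eq_nch[of t "g t" u] gn True by simp
      also have "\<dots> = snd (hm_in A) \<sigma>" using wf_nch[OF gwf[OF wf]] gn True by (simp add: \<sigma>_def)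
      finally show ?thesis .
    qed
    have dl: "bdelta (Sim q) d (\<mu>B u) = map_option (map_rtree ?mf) (hm_delta A q \<sigma> (\<mu> u))"
      using bdelta_Sim[OF dD sS] mB[OF True] rkeq by (simp add: simstep_def \<sigma>_def)
    have mvs: "move t u dir = move (g t) u dir" for dir using move_nodes[OF gn[symmetric]] .
    show ?thesis
    proof (cases "hm_delta A q \<sigma> (\<mu> u)")
      case None then show ?thesis unfolding CA CB using True dl gn by (simp add: d_def \<sigma>_def)
    next
      case (Some r)
      have mv: "(\<forall>q' m' dir. Inr (q', m', dir) \<in> set_rtree (map_rtree ?mf r) \<longrightarrow> move t u dir \<noteq> None) \<longleftrightarrow>
                (\<forall>q' m' dir. Inr (q', m', dir) \<in> set_rtree r \<longrightarrow> move (g t) u dir \<noteq> None)"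
      proof
        assume h: "\<forall>q' m' dir. Inr (q', m', dir) \<in> set_rtree (map_rtree ?mf r) \<longrightarrow> move t u dir \<noteq> None"
        show "\<forall>q' m' dir. Inr (q', m', dir) \<in> set_rtree r \<longrightarrow> move (g t) u dir \<noteq> None"
        proof (intro allI impI)
          fix a b dir assume "Inr (a, b, dir) \<in> set_rtree r"
          then have "Inr (Sim a, Fin \<sigma> b, dir) \<in> set_rtree (map_rtree ?mf r)"
            unfolding \<sigma>_def by (simp only: rtree.set_map) (rule image_eqI[where x="Inr (a,b,dir)"], simp_all)
          then show "move (g t) u dir \<noteq> None" using h mvs by metis
        qed
      next
        assume h: "\<forall>q' m' dir. Inr (q', m', dir) \<in> set_rtree r \<longrightarrow> move (g t) u dir \<noteq> None"
        show "\<forall>q' m' dir. Inr (q', m', dir) \<in> set_rtree (map_rtree ?mf r) \<longrightarrow> move t u dir \<noteq> None"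
        proof (intro allI impI)
          fix a b dir assume "Inr (a, b, dir) \<in> set_rtree (map_rtree ?mf r)"
          then obtain x where x: "x \<in> set_rtree r" "?mf x = Inr (a, b, dir)" by (auto simp: rtree.set_map)
          then obtain a' b' where "x = Inr (a', b', dir)" using mapsum_Inr[OF x(2)] by auto
          then show "move t u dir \<noteq> None" using h x mvs by metis
        qed
      qed
      show ?thesis
      proof (cases "\<forall>q' m' dir. Inr (q', m', dir) \<in> set_rtree r \<longrightarrow> move (g t) u dir \<noteq> None")
        case False
        then have "\<not> (\<forall>q' m' dir. Inr (q', m', dir) \<in> set_rtree (map_rtree ?mf r) \<longrightarrow> move t u dir \<noteq> None)"
          using mv by blast
        then show ?thesis unfolding CA CB using True gn dl Some False
          by (simp only: step.simps BM_simps d_def[symmetric] \<sigma>_def[symmetric] if_False if_True simp_thms option.simps option.rel_inject)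
      next
        case ok: True
        let ?g1 = "\<lambda>x. case x of Inl c \<Rightarrow> Inl c | Inr (q'', m'', dir) \<Rightarrow> Inr (the (move t u dir), q'', \<mu>B(u := m''))"
        let ?g2 = "\<lambda>x. case x of Inl c \<Rightarrow> Inl c | Inr (q'', m'', dir) \<Rightarrow> Inr (the (move (g t) u dir), q'', \<mu>(u := m''))"
        have ok1: "\<forall>q' m' dir. Inr (q', m', dir) \<in> set_rtree (map_rtree ?mf r) \<longrightarrow> move t u dir \<noteq> None" using ok mv by blast
        have s1: "step BM t CB = Some (map_rtree ?g1 (map_rtree ?mf r))"
          unfolding CB using True dl ok1 Some by (simp add: d_def)
        have s2: "step A (g t) CA = Some (map_rtree ?g2 r)"
          unfolding CA using True gn Some ok by (simp add: \<sigma>_def)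
        have "rel_rtree (rel_sum (=) (SR t)) (map_rtree ?g1 (map_rtree ?mf r)) (map_rtree ?g2 r)"
          unfolding rtree.rel_map rtree.map_comp
        proof (rule rtree.rel_refl_strong)
          fix x assume x: "x \<in> set_rtree r"
          show "rel_sum (=) (SR t) ((?g1 \<circ> ?mf) x) (?g2 x)"
          proof (cases x)
            case (Inl c) then show ?thesis by simp
          next
            case (Inr y)
            obtain a b dir where y: "y = (a, b, dir)" by (cases y) auto
            have "\<forall>w\<in>nodes t. (\<mu>B(u := Fin (lab (g t) u) b)) w = Fin (lab (g t) w) ((\<mu>(u := b)) w)"
              using mB by auto
            then show ?thesis using Inr y mvs by (simp add: SR_def)
          qed
        qed
        then show ?thesis unfolding s1 s2 by simp
      qed
    qed
  qed
qed

lemma output_eq: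
  assumes wf: "wf_tree \<Delta> t"
  shows "hm_output BM t = hm_output A (g t)"
proof -
  obtain q2 \<mu>2 where P: "(dstep t)\<^sup>*\<^sup>* (init_conf BM) ([], q2, \<mu>2)" "nonSim q2"
    "bdelta q2 (lab t []) (\<mu>2 []) = bdelta (Sim (hm_init A)) (lab t []) (Fin (lab (g t) []) (hm_top A))"
    "\<forall>w. w \<noteq> [] \<longrightarrow> w \<in> nodes t \<longrightarrow> \<mu>2 w = Fin (lab (g t) w) (hm_top A)"
    using prepass[OF wf] by blast
  define \<mu>F where "\<mu>F = \<mu>2([] := Fin (lab (g t) []) (hm_top A))"
  have st: "step BM t ([], q2, \<mu>2) = step BM t ([], Sim (hm_init A), \<mu>F)"
    by (rule step_eq) (use P(3) in \<open>simp_all add: \<mu>F_def\<close>)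
  have sr: "SR t ([], Sim (hm_init A), \<mu>F) (init_conf A)"
    using P(4) by (auto simp: SR_def init_conf_def \<mu>F_def)
  have ev: "evalC BM t (init_conf BM) s \<longleftrightarrow> evalC A (g t) (init_conf A) s" for s
  proof -
    have "evalC BM t (init_conf BM) s \<longleftrightarrow> evalC BM t ([], q2, \<mu>2) s"
      by (rule evalC_star[OF dstar_sstar[OF P(1)]])
    also have "\<dots> \<longleftrightarrow> evalC BM t ([], Sim (hm_init A), \<mu>F) s" by (rule evalC_same_step[OF st])
    also have "\<dots> \<longleftrightarrow> evalC A (g t) (init_conf A) s" by (rule sim_evalC_iff[OF SR_simrel[OF wf] sr])
    finally show ?thesis .
  qed
  show ?thesis unfolding hm_output_def ev by simp
qed

end




lemma step_leafD:
  assumes "step X t (u, q, \<mu>) = Some r" "Inr (u', q', \<mu>') \<in> set_rtree r"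
  shows "\<exists>r0 m' dir. hm_delta X q (lab t u) (\<mu> u) = Some r0 \<and> Inr (q', m', dir) \<in> set_rtree r0 \<and>
           \<mu>' = \<mu>(u := m') \<and> move t u dir = Some u'"
proof -
  obtain r0 where r0: "u \<in> nodes t" "hm_delta X q (lab t u) (\<mu> u) = Some r0"
    and ok: "\<forall>q' m' d. Inr (q', m', d) \<in> set_rtree r0 \<longrightarrow> move t u d \<noteq> None"
    and r: "r = map_rtree (\<lambda>x. case x of Inl c \<Rightarrow> Inl c | Inr (q', m', d) \<Rightarrow> Inr (the (move t u d), q', \<mu>(u := m'))) r0"
    using assms(1) by (auto split: if_splits option.splits)
  obtain x where x: "x \<in> set_rtree r0" "(case x of Inl c \<Rightarrow> Inl c | Inr (q', m', d) \<Rightarrow> Inr (the (move t u d), q', \<mu>(u := m'))) = Inr (u', q', \<mu>')"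
    using assms(2) unfolding r by (auto simp: rtree.set_map)
  obtain a b d where xe: "x = Inr (a, b, d)"
  proof (cases x)
    case (Inl c) then show ?thesis using x(2) by simp
  next
    case (Inr y) then show ?thesis using that by (cases y) auto
  qed
  then have e: "u' = the (move t u d)" "q' = a" "\<mu>' = \<mu>(u := b)" using x(2) by auto
  have "move t u d \<noteq> None" using ok x(1) xe by blast
  then show ?thesis using r0 x(1) xe e by (intro exI[of _ r0] exI[of _ b] exI[of _ d]) auto
qed

lemma det_star:
  assumes det: "\<And>x y z. R x y \<Longrightarrow> R x z \<Longrightarrow> y = z"
  shows "R\<^sup>*\<^sup>* a b \<Longrightarrow> R\<^sup>*\<^sup>* a c \<Longrightarrow> (\<forall>d. \<not> R b d) \<Longrightarrow> (\<forall>d. \<not> R c d) \<Longrightarrow> b = c"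
proof (induction arbitrary: c rule: converse_rtranclp_induct)
  case base
  from base.prems(1) show ?case
  proof (cases rule: converse_rtranclpE)
    case base then show ?thesis by simp
  next
    case (step y) then show ?thesis using base.prems(2) by simp
  qed
next
  case (step a a')
  note h1 = step.hyps(1) and IH = step.IH and pr = step.prems
  from pr(1) show ?case
  proof (cases rule: converse_rtranclpE)
    case base then show ?thesis using h1 pr(3) by simp
  next
    case (step a'')
    then have "a'' = a'" using det h1 by simp
    then have "R\<^sup>*\<^sup>* a' c" using step by simp
    then show ?thesis by (rule IH) (use pr in simp_all)
  qed
qed

lemma card_drop:
  "card {i. k \<le> i \<and> i < length xs \<and> P (xs ! i)} = card {j. j < length (drop k xs) \<and> P (drop k xs ! j)}"
proof -
  have "{i. k \<le> i \<and> i < length xs \<and> P (xs ! i)} = (\<lambda>j. j + k) ` {j. j < length (drop k xs) \<and> P (drop k xs ! j)}"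
  proof (intro equalityI subsetI)
    fix i assume "i \<in> {i. k \<le> i \<and> i < length xs \<and> P (xs ! i)}"
    then show "i \<in> (\<lambda>j. j + k) ` {j. j < length (drop k xs) \<and> P (drop k xs ! j)}"
      by (intro image_eqI[where x="i - k"]) auto
  qed (auto simp: add.commute)
  moreover have "inj (\<lambda>j::nat. j + k)" by (simp add: inj_def)
  ultimately show ?thesis by (simp add: card_image inj_on_def)
qed

lemma card_Cons_le:
  "card {j. j < length xs \<and> P (xs ! j)} \<le> card {j. j < length (x # xs) \<and> P ((x # xs) ! j)}"
proof -
  have "Suc ` {j. j < length xs \<and> P (xs ! j)} \<subseteq> {j. j < length (x # xs) \<and> P ((x # xs) ! j)}" by auto
  moreover have "card (Suc ` {j. j < length xs \<and> P (xs ! j)}) = card {j. j < length xs \<and> P (xs ! j)}"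
    by (simp add: card_image)
  moreover have "finite {j. j < length (x # xs) \<and> P ((x # xs) ! j)}" by simp
  ultimately show ?thesis using card_mono by metis
qed

context hsim
begin

fun lvl :: "('a, 'm) bmem \<Rightarrow> nat" where
  "lvl Top = 0"
| "lvl (Col r ss) = Suc (length ss)"
| "lvl (Pas r tab ss i) = MR + 2 + i"
| "lvl (Fin \<sigma> m) = 2 * MR + 3"

lemma lvl_MemB: "m \<in> MemB \<Longrightarrow> lvl m \<le> 2 * MR + 3"
  by (cases m) (auto simp: LS_def)

lemma simstep_leaves:
  assumes "simstep q d \<sigma> m = Some r" "Inr (q', m', dir) \<in> set_rtree r"
  shows "\<exists>q'' m''. q' = Sim q'' \<and> m' = Fin \<sigma> m''"
proof -
  obtain r0 where r0: "r = map_rtree (map_sum id (\<lambda>(q', m', dir). (Sim q', Fin \<sigma> m', dir))) r0"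
    using assms(1) by (auto simp: simstep_def split: if_splits)
  obtain x where x: "x \<in> set_rtree r0" "map_sum id (\<lambda>(q', m', dir). (Sim q', Fin \<sigma> m', dir)) x = Inr (q', m', dir)"
    using assms(2) unfolding r0 by (auto simp: rtree.set_map)
  then show ?thesis using mapsum_Inr[OF x(2)] by auto
qed

definition Good :: "'q bst \<Rightarrow> ('a, 'm) bmem \<Rightarrow> ('c + ('q bst \<times> ('a, 'm) bmem \<times> dir)) rtree \<Rightarrow> bool" where
  "Good q m r \<longleftrightarrow> (\<forall>q' m' dir. Inr (q', m', dir) \<in> set_rtree r \<longrightarrow>
     (nonSim q' \<longrightarrow> r = leaf (q', m', dir)) \<and> (\<not> nonSim q \<longrightarrow> \<not> nonSim q') \<and>
     lvl m \<le> lvl m' \<and> (nonSim q \<longrightarrow> lvl m < lvl m'))"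

lemma simstep_Good:
  assumes "simstep q d \<sigma> m = Some r" "lvl mm \<le> 2 * MR + 3" "nonSim qq \<longrightarrow> lvl mm < 2 * MR + 3"
  shows "Good qq mm r"
  unfolding Good_def using simstep_leaves[OF assms(1)] assms(2,3) by fastforce

lemma proc2_Good:
  assumes "proc2 r tab ss d i = Some R" "i < rk d \<longrightarrow> lvl mm < MR + 3 + i" "lvl mm < 2 * MR + 3" "nonSim qq"
  shows "Good qq mm R"
proof (cases "i < rk d")
  case True
  then show ?thesis using assms by (auto simp: proc2_def Good_def)
next
  case False
  show ?thesis
  proof (cases r)
    case True
    then have "simstep (hm_init A) d (ot (tab ! tr d (UNIV, {}) ss)) (hm_top A) = Some R"
      using assms(1) False by (auto simp: proc2_def Let_def split: if_splits)
    then show ?thesis by (rule simstep_Good) (use assms in auto)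
  next
    case f: False
    then show ?thesis using assms False by (auto simp: proc2_def Good_def Let_def split: if_splits)
  qed
qed

lemma proc1_Good:
  assumes "proc1 r d ss = Some R" "lvl mm < Suc (length ss)" "d \<in> fst \<Delta>" "nonSim qq"
  shows "Good qq mm R"
proof -
  have "length ss \<le> rk d \<Longrightarrow> length ss \<le> MR" using rk_MR[OF assms(3)] by simp
  then show ?thesis using assms proc2_Good[of True "[0..<N]" ss d 0 R mm qq]
    by (auto simp: proc1_def Good_def split: if_splits)
qed

lemma bdelta_Good:
  assumes "bdelta q d m = Some r"
  shows "Good q m r"
proof -
  have in1: "d \<in> fst \<Delta>" "q \<in> StB" "m \<in> MemB" and h0: "bdelta0 q d m = Some r"
    using assms by (auto simp: bdelta_def split: if_splits)
  show ?thesis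
  proof (cases q)
    case (D1 b)
    show ?thesis
    proof (cases m)
      case Top then show ?thesis using h0 D1 in1 proc1_Good[of b d "[]" r m q] by simp
    qed (use h0 D1 in auto)
  next
    case (U1 s)
    show ?thesis
    proof (cases m)
      case (Col b ss) then show ?thesis using h0 U1 in1 proc1_Good[of b d "ss @ [s]" r m q] by simp
    qed (use h0 U1 in auto)
  next
    case (D2 tab)
    show ?thesis
    proof (cases m)
      case (Col b ss) then show ?thesis using h0 D2 in1 proc2_Good[of b tab ss d 0 r m q] by (auto simp: LS_def)
    qed (use h0 D2 in auto)
  next
    case U2
    show ?thesis
    proof (cases m)
      case (Pas b tab ss i) then show ?thesis using h0 U2 in1 proc2_Good[of b tab ss d i r m q] by auto
    qed (use h0 U2 in auto)
  next
    case (Sim q')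
    show ?thesis
    proof (cases m)
      case (Fin \<sigma> m') then show ?thesis using h0 Sim in1 simstep_Good[of q' d \<sigma> m' r m q] by simp
    qed (use h0 Sim in auto)
  qed
qed

end




lemma chainf_drop: "chainf X t cs \<Longrightarrow> chainf X t (drop k cs)"
  unfolding chainf_nth by simp

lemma chainf_head: "step X t C = step X t C' \<Longrightarrow> chainf X t (C # rest) \<Longrightarrow> chainf X t (C' # rest)"
  by (cases rest) auto

lemma step_single:
  assumes "step X t (u, q, \<mu>) = Some rr" "hm_delta X q (lab t u) (\<mu> u) = Some (leaf x)"
  shows "\<exists>y. rr = leaf y"
  using assms by (cases x) (auto simp: leaf_def split: if_splits)

context hsim
begin

lemma run_step:
  assumes br: "branch_run BM t cs" and i: "Suc i < length cs"
  shows "\<exists>r m' dir. bdelta (fst (snd (cs ! i))) (lab t (fst (cs ! i))) (snd (snd (cs ! i)) (fst (cs ! i))) = Some r \<and>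
     Inr (fst (snd (cs ! Suc i)), m', dir) \<in> set_rtree r \<and>
     snd (snd (cs ! Suc i)) = (snd (snd (cs ! i)))(fst (cs ! i) := m')"
proof -
  obtain rr where rr: "step BM t (cs ! i) = Some rr" "Inr (cs ! Suc i) \<in> set_rtree rr"
    using br i unfolding branch_run_def by blast
  obtain u q \<mu> where ci: "cs ! i = (u, q, \<mu>)" by (cases "cs ! i") auto
  obtain u' q' \<mu>' where cj: "cs ! Suc i = (u', q', \<mu>')" by (cases "cs ! Suc i") auto
  show ?thesis using step_leafD[of BM t u q \<mu> rr u' q' \<mu>'] rr unfolding ci cj by auto
qed

lemma run_init: "branch_run BM t cs \<Longrightarrow> cs ! 0 = ([], D1 True, \<lambda>_. Top)"
  unfolding branch_run_def init_conf_def by (cases cs) auto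

lemma run_mem:
  assumes br: "branch_run BM t cs"
  shows "i < length cs \<Longrightarrow> snd (snd (cs ! i)) v \<in> MemB"
proof (induction i arbitrary: v)
  case 0 then show ?case using run_init[OF br] by simp
next
  case (Suc i)
  obtain r m' dir where R: "bdelta (fst (snd (cs ! i))) (lab t (fst (cs ! i))) (snd (snd (cs ! i)) (fst (cs ! i))) = Some r"
     "Inr (fst (snd (cs ! Suc i)), m', dir) \<in> set_rtree r"
     "snd (snd (cs ! Suc i)) = (snd (snd (cs ! i)))(fst (cs ! i) := m')"
    using run_step[OF br Suc.prems] by blast
  have "OK (lab t (fst (cs ! i))) r" using bdelta_ok[OF R(1)] .
  then have "m' \<in> MemB" using wfY_set R(2) unfolding OK_def by fastforce
  then show ?case using R(3) Suc.IH Suc.prems by simp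
qed

lemma run_lvl:
  assumes br: "branch_run BM t cs" and i: "Suc i < length cs"
  shows "lvl (snd (snd (cs ! i)) v) \<le> lvl (snd (snd (cs ! Suc i)) v)"
    and "nonSim (fst (snd (cs ! i))) \<Longrightarrow> lvl (snd (snd (cs ! i)) (fst (cs ! i))) < lvl (snd (snd (cs ! Suc i)) (fst (cs ! i)))"
    and "\<not> nonSim (fst (snd (cs ! i))) \<Longrightarrow> \<not> nonSim (fst (snd (cs ! Suc i)))"
proof -
  obtain r m' dir where R: "bdelta (fst (snd (cs ! i))) (lab t (fst (cs ! i))) (snd (snd (cs ! i)) (fst (cs ! i))) = Some r"
     "Inr (fst (snd (cs ! Suc i)), m', dir) \<in> set_rtree r"
     "snd (snd (cs ! Suc i)) = (snd (snd (cs ! i)))(fst (cs ! i) := m')"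
    using run_step[OF br i] by blast
  have G: "Good (fst (snd (cs ! i))) (snd (snd (cs ! i)) (fst (cs ! i))) r" by (rule bdelta_Good[OF R(1)])
  then have g: "lvl (snd (snd (cs ! i)) (fst (cs ! i))) \<le> lvl m'"
    "nonSim (fst (snd (cs ! i))) \<Longrightarrow> lvl (snd (snd (cs ! i)) (fst (cs ! i))) < lvl m'"
    "\<not> nonSim (fst (snd (cs ! i))) \<Longrightarrow> \<not> nonSim (fst (snd (cs ! Suc i)))"
    using R(2) unfolding Good_def by blast+
  show "lvl (snd (snd (cs ! i)) v) \<le> lvl (snd (snd (cs ! Suc i)) v)" using g(1) R(3) by (cases "v = fst (cs ! i)") auto
  show "nonSim (fst (snd (cs ! i))) \<Longrightarrow> lvl (snd (snd (cs ! i)) (fst (cs ! i))) < lvl (snd (snd (cs ! Suc i)) (fst (cs ! i)))"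
    using g(2) R(3) by simp
  show "\<not> nonSim (fst (snd (cs ! i))) \<Longrightarrow> \<not> nonSim (fst (snd (cs ! Suc i)))" by (rule g(3))
qed

lemma run_lvl_mono:
  assumes br: "branch_run BM t cs"
  shows "i \<le> j \<Longrightarrow> j < length cs \<Longrightarrow> lvl (snd (snd (cs ! i)) v) \<le> lvl (snd (snd (cs ! j)) v)"
proof (induction j)
  case 0 then show ?case by simp
next
  case (Suc j)
  show ?case
  proof (cases "i = Suc j")
    case True then show ?thesis by simp
  next
    case False
    then have "lvl (snd (snd (cs ! i)) v) \<le> lvl (snd (snd (cs ! j)) v)" using Suc by simp
    also have "\<dots> \<le> lvl (snd (snd (cs ! Suc j)) v)" by (rule run_lvl(1)[OF br Suc.prems(2)])
    finally show ?thesis .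
  qed
qed

lemma run_dstep:
  assumes br: "branch_run BM t cs" and i: "Suc i < length cs" and ns: "nonSim (fst (snd (cs ! Suc i)))"
  shows "dstep t (cs ! i) (cs ! Suc i)"
proof -
  obtain rr where rr: "step BM t (cs ! i) = Some rr" "Inr (cs ! Suc i) \<in> set_rtree rr"
    using br i unfolding branch_run_def by blast
  obtain r m' dir where R: "bdelta (fst (snd (cs ! i))) (lab t (fst (cs ! i))) (snd (snd (cs ! i)) (fst (cs ! i))) = Some r"
     "Inr (fst (snd (cs ! Suc i)), m', dir) \<in> set_rtree r"
    using run_step[OF br i] by blast
  have G: "Good (fst (snd (cs ! i))) (snd (snd (cs ! i)) (fst (cs ! i))) r" by (rule bdelta_Good[OF R(1)])
  then have rl: "r = leaf (fst (snd (cs ! Suc i)), m', dir)" using R(2) ns unfolding Good_def by blast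
  have nsi: "nonSim (fst (snd (cs ! i)))" using run_lvl(3)[OF br i] ns by blast
  obtain u q \<mu> where ci: "cs ! i = (u, q, \<mu>)" by (cases "cs ! i") auto
  have h1: "hm_delta BM q (lab t u) (\<mu> u) = Some (leaf (fst (snd (cs ! Suc i)), m', dir))" using R(1) rl ci by simp
  have h2: "step BM t (u, q, \<mu>) = Some rr" using rr(1) ci by simp
  obtain y where "rr = leaf y" using step_single[OF h2 h1] by blast
  then have "rr = leaf (cs ! Suc i)" using rr(2) by (simp add: leaf_def)
  then show ?thesis using rr(1) ns nsi by (simp add: dstep_def)
qed

lemma run_prefix:
  assumes br: "branch_run BM t cs"
  shows "i < length cs \<Longrightarrow> (\<forall>j\<le>i. nonSim (fst (snd (cs ! j)))) \<Longrightarrow> (dstep t)\<^sup>*\<^sup>* (init_conf BM) (cs ! i)"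
proof (induction i)
  case 0 then show ?case using run_init[OF br] by (simp add: init_conf_def)
next
  case (Suc i)
  then have "(dstep t)\<^sup>*\<^sup>* (init_conf BM) (cs ! i)" by simp
  moreover have "dstep t (cs ! i) (cs ! Suc i)" using run_dstep[OF br Suc.prems(1)] Suc.prems(2) by simp
  ultimately show ?case by (rule rtranclp.rtrancl_into_rtrancl)
qed

lemma dstep_det: "dstep t x y \<Longrightarrow> dstep t x z \<Longrightarrow> y = z"
  by (simp add: dstep_def leaf_def)

end




context hsim
begin

lemma THM_BM:
  assumes TA: "is_THM A"
  shows "is_THM BM"
proof -
  obtain NA where NA: "\<forall>t cs u. wf_tree (hm_in A) t \<longrightarrow> branch_run A t cs \<longrightarrow>
        card {i. i < length cs \<and> fst (cs ! i) = u} \<le> NA" using TA unfolding is_THM_def by blast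
  define H where "H = 2 * MR + 3"
  show ?thesis unfolding is_THM_def
  proof (intro conjI exI[of _ "H + 1 + NA"] allI impI)
    show "is_uTHM BM" by (rule uTHM_BM)
    fix t cs u assume wt0: "wf_tree (hm_in BM) t" and br: "branch_run BM t cs"
    have wf: "wf_tree \<Delta> t" using wt0 by simp
    define \<mu> where "\<mu> i = snd (snd (cs ! i))" for i
    define K where "K = {i. i < length cs \<and> fst (cs ! i) = u}"
    define KN' where "KN' = {i. Suc i < length cs \<and> fst (cs ! i) = u \<and> nonSim (fst (snd (cs ! i)))}"
    define KS where "KS = {i. i < length cs \<and> fst (cs ! i) = u \<and> \<not> nonSim (fst (snd (cs ! i)))}"
    have ne: "cs \<noteq> []" using br unfolding branch_run_def by simp
    have Ksub: "K \<subseteq> insert (length cs - 1) KN' \<union> KS"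
      unfolding K_def KN'_def KS_def by auto
    have fK: "finite KN'" "finite KS" unfolding KN'_def KS_def
      by (rule finite_subset[of _ "{..<length cs}"], auto)+
    have cKN: "card KN' \<le> H"
    proof -
      have lt: "lvl (\<mu> i u) < lvl (\<mu> (Suc i) u)" if "i \<in> KN'" for i
        using run_lvl(2)[OF br, of i] that unfolding KN'_def \<mu>_def by auto
      have le: "lvl (\<mu> i u) \<le> H" if "i < length cs" for i
        using lvl_MemB[OF run_mem[OF br that]] unfolding H_def \<mu>_def by blast
      have inj: "inj_on (\<lambda>i. lvl (\<mu> i u)) KN'"
      proof (rule inj_onI)
        fix i j assume ij: "i \<in> KN'" "j \<in> KN'" "lvl (\<mu> i u) = lvl (\<mu> j u)"
        show "i = j"
        proof (rule ccontr)
          assume "i \<noteq> j"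
          then consider "i < j" | "j < i" by linarith
          then show False
          proof cases
            case 1
            have "lvl (\<mu> i u) < lvl (\<mu> (Suc i) u)" by (rule lt[OF ij(1)])
            also have "\<dots> \<le> lvl (\<mu> j u)" unfolding \<mu>_def
              by (rule run_lvl_mono[OF br]) (use 1 ij(2) in \<open>auto simp: KN'_def\<close>)
            finally show False using ij(3) by simp
          next
            case 2
            have "lvl (\<mu> j u) < lvl (\<mu> (Suc j) u)" by (rule lt[OF ij(2)])
            also have "\<dots> \<le> lvl (\<mu> i u)" unfolding \<mu>_def
              by (rule run_lvl_mono[OF br]) (use 2 ij(1) in \<open>auto simp: KN'_def\<close>)
            finally show False using ij(3) by simp
          qed
        qed
      qed
      have "(\<lambda>i. lvl (\<mu> i u)) ` KN' \<subseteq> {..<H}"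
      proof
        fix x assume "x \<in> (\<lambda>i. lvl (\<mu> i u)) ` KN'"
        then obtain i where i: "i \<in> KN'" "x = lvl (\<mu> i u)" by blast
        have "Suc i < length cs" using i(1) by (simp add: KN'_def)
        then show "x \<in> {..<H}" using lt[OF i(1)] le[of "Suc i"] i(2) by simp
      qed
      then have "card ((\<lambda>i. lvl (\<mu> i u)) ` KN') \<le> H" by (metis card_lessThan card_mono finite_lessThan)
      then show ?thesis using card_image[OF inj] by simp
    qed
    have cKS: "card KS \<le> NA"
    proof (cases "KS = {}")
      case True then show ?thesis by simp
    next
      case False
      define P where "P i \<longleftrightarrow> i < length cs \<and> \<not> nonSim (fst (snd (cs ! i)))" for i
      have exP: "\<exists>i. P i" using False unfolding KS_def P_def by blast
      define i0 where "i0 = (LEAST i. P i)"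
      have Pi0: "P i0" using LeastI_ex[OF exP] by (simp add: i0_def)
      have notP: "\<And>j. j < i0 \<Longrightarrow> \<not> P j" using not_less_Least by (simp add: i0_def)
      have i0pos: "0 < i0"
      proof (rule ccontr)
        assume "\<not> 0 < i0"
        then have "i0 = 0" by simp
        then show False using Pi0 run_init[OF br] by (simp add: P_def)
      qed
      define e where "e = i0 - 1"
      have ei0: "Suc e = i0" using i0pos by (simp add: e_def)
      have elen: "Suc e < length cs" using Pi0 ei0 by (simp add: P_def)
      have pre: "\<forall>j\<le>e. nonSim (fst (snd (cs ! j)))" using notP elen ei0 by (auto simp: P_def)
      have starE: "(dstep t)\<^sup>*\<^sup>* (init_conf BM) (cs ! e)" by (rule run_prefix[OF br _ pre]) (use elen in simp)
      have termE: "\<forall>d. \<not> dstep t (cs ! e) d"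
      proof (intro allI notI)
        fix d assume ds: "dstep t (cs ! e) d"
        obtain rr where rr: "step BM t (cs ! e) = Some rr" "Inr (cs ! Suc e) \<in> set_rtree rr"
          using br elen unfolding branch_run_def by blast
        have "rr = leaf d" using ds rr(1) by (simp add: dstep_def)
        then have "cs ! Suc e = d" using rr(2) by (simp add: leaf_def)
        then show False using ds Pi0 ei0 by (simp add: dstep_def P_def)
      qed
      obtain q2 \<mu>2 where PP: "(dstep t)\<^sup>*\<^sup>* (init_conf BM) ([], q2, \<mu>2)" "nonSim q2"
        "bdelta q2 (lab t []) (\<mu>2 []) = bdelta (Sim (hm_init A)) (lab t []) (Fin (lab (g t) []) (hm_top A))"
        "\<forall>w. w \<noteq> [] \<longrightarrow> w \<in> nodes t \<longrightarrow> \<mu>2 w = Fin (lab (g t) w) (hm_top A)"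
        using prepass[OF wf] by blast
      define \<mu>F where "\<mu>F = \<mu>2([] := Fin (lab (g t) []) (hm_top A))"
      have st: "step BM t ([], q2, \<mu>2) = step BM t ([], Sim (hm_init A), \<mu>F)"
        by (rule step_eq) (use PP(3) in \<open>simp_all add: \<mu>F_def\<close>)
      have termF: "\<forall>d. \<not> dstep t ([], q2, \<mu>2) d"
      proof (intro allI notI)
        fix d assume ds: "dstep t ([], q2, \<mu>2) d"
        obtain u' q' \<mu>' where d: "d = (u', q', \<mu>')" by (cases d) auto
        have s: "step BM t ([], Sim (hm_init A), \<mu>F) = Some (leaf d)" using ds st by (simp add: dstep_def)
        obtain r0 m' dir where r0: "hm_delta BM (Sim (hm_init A)) (lab t []) (\<mu>F []) = Some r0" "Inr (q', m', dir) \<in> set_rtree r0"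
          using step_leafD[OF s[unfolded d]] by (auto simp: leaf_def)
        have "Good (Sim (hm_init A)) (\<mu>F []) r0" using bdelta_Good r0(1) by simp
        then have "\<not> nonSim q'" using r0(2) unfolding Good_def by auto
        then show False using ds d by (simp add: dstep_def)
      qed
      have EF: "cs ! e = ([], q2, \<mu>2)"
        by (rule det_star[of "dstep t", OF dstep_det starE PP(1) termE termF]) 
      have ch: "chainf BM t cs" using br unfolding branch_run_chainf by simp
      have de: "drop e cs = cs ! e # drop i0 cs" using elen ei0 by (metis Cons_nth_drop_Suc Suc_lessD)
      have ch1: "chainf BM t (([], q2, \<mu>2) # drop i0 cs)" using chainf_drop[OF ch, of e] de EF by simp
      have ch2: "chainf BM t (([], Sim (hm_init A), \<mu>F) # drop i0 cs)" by (rule chainf_head[OF st ch1])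
      have sr: "SR t ([], Sim (hm_init A), \<mu>F) (init_conf A)"
        using PP(4) by (auto simp: SR_def init_conf_def \<mu>F_def)
      obtain as where as: "chainf A (g t) (init_conf A # as)" "list_all2 (SR t) (drop i0 cs) as"
        using sim_chain[OF SR_simrel[OF wf] ch2 sr] by blast
      have brA: "branch_run A (g t) (init_conf A # as)" using as(1) unfolding branch_run_chainf by simp
      have "KS \<subseteq> {i. i0 \<le> i \<and> i < length cs \<and> fst (cs ! i) = u}"
      proof
        fix i assume "i \<in> KS"
        then have "P i" "i < length cs" "fst (cs ! i) = u" unfolding KS_def P_def by auto
        then show "i \<in> {i. i0 \<le> i \<and> i < length cs \<and> fst (cs ! i) = u}"
          using Least_le[of P i] by (simp add: i0_def)
      qed
      then have "card KS \<le> card {i. i0 \<le> i \<and> i < length cs \<and> fst (cs ! i) = u}"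
        by (rule card_mono[rotated]) simp
      also have "\<dots> = card {j. j < length (drop i0 cs) \<and> fst (drop i0 cs ! j) = u}"
        by (rule card_drop)
      also have "\<dots> = card {j. j < length as \<and> fst (as ! j) = u}"
        by (rule card_pos_eq) (use as(2) in \<open>auto simp: SR_def elim: list_all2_mono\<close>)
      also have "\<dots> \<le> card {j. j < length (init_conf A # as) \<and> fst ((init_conf A # as) ! j) = u}"
        by (rule card_Cons_le)
      also have "\<dots> \<le> NA" using NA gwf[OF wf] brA by blast
      finally show ?thesis .
    qed
    have "card K \<le> card (insert (length cs - 1) KN' \<union> KS)"
      by (rule card_mono) (use fK Ksub in auto)
    also have "\<dots> \<le> card (insert (length cs - 1) KN') + card KS" by (rule card_Un_le)
    also have "\<dots> \<le> (card KN' + 1) + card KS" using fK by (simp add: card_insert_if)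
    also have "\<dots> \<le> H + 1 + NA" using cKN cKS by simp
    finally show "card {i. i < length cs \<and> fst (cs ! i) = u} \<le> H + 1 + NA" unfolding K_def .
  qed
qed

lemma computes_BM:
  assumes "computes A f"
  shows "computes BM (\<lambda>t. f (g t))"
  unfolding computes_def
proof (intro allI impI)
  fix t assume "wf_tree (hm_in BM) t"
  then have wf: "wf_tree \<Delta> t" by simp
  have "hm_output BM t = hm_output A (g t)" by (rule output_eq[OF wf])
  also have "\<dots> = f (g t)" using assms gwf[OF wf] unfolding computes_def by blast
  finally show "hm_output BM t = f (g t)" .
qed

end




theorem mainTheorem17:
  fixes A :: "('q, 'm, 'a, 'c) hm"
    and f :: "'a rtree \<Rightarrow> 'c rtree option"
    and g :: "'d rtree \<Rightarrow> 'a rtree"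
    and \<Delta> :: "'d ralph"
  assumes "finite (fst \<Delta>)"
    and "mso_relabeling \<Delta> (hm_in A) g"
    and "is_uTHM A"
    and "computes A f"
  shows "(\<exists>B :: (nat, nat, 'd, 'c) hm.
            is_uTHM B \<and> hm_in B = \<Delta> \<and> hm_outa B = hm_outa A \<and> computes B (\<lambda>t. f (g t)))
       \<and> (is_THM A \<longrightarrow>
          (\<exists>B :: (nat, nat, 'd, 'c) hm.
            is_THM B \<and> hm_in B = \<Delta> \<and> hm_outa B = hm_outa A \<and> computes B (\<lambda>t. f (g t))))"
proof -
  have finS: "finite (fst (hm_in A))" using assms(3) unfolding is_uTHM_def by blast
  obtain tr N ot where TR: "\<forall>a m cs. tr a m cs < N"
    "\<forall>t. wf_tree \<Delta> t \<longrightarrow> (\<forall>u\<in>nodes t. lab (g t) u = ot (brun tr (\<lambda>p. if p = u then (UNIV, {}) else ({}, {})) t))"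
    using relab_aut[OF finS assms(2)] by blast
  have G: "\<And>t. wf_tree \<Delta> t \<Longrightarrow> wf_tree (hm_in A) (g t) \<and> nodes (g t) = nodes t"
    using assms(2) unfolding mso_relabeling_def by blast
  interpret H: hsim A \<Delta> g tr N ot
  proof
    show "is_uTHM A" by (rule assms(3))
    show "finite (fst \<Delta>)" by (rule assms(1))
    show "tr a m cs < N" for a m cs using TR(1) by blast
    show "wf_tree (hm_in A) (g t)" if "wf_tree \<Delta> t" for t using G[OF that] by blast
    show "nodes (g t) = nodes t" if "wf_tree \<Delta> t" for t using G[OF that] by blast
    show "lab (g t) u = ot (brun tr (\<lambda>p. if p = u then (UNIV, {}) else ({}, {})) t)"
      if "wf_tree \<Delta> t" "u \<in> nodes t" for t u using TR(2) that by blast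
  qed
  obtain B' :: "(nat, nat, 'd, 'c) hm" where B': "is_uTHM B'" "hm_in B' = hm_in H.BM" "hm_outa B' = hm_outa H.BM"
    "\<forall>t. hm_output B' t = hm_output H.BM t" "is_THM H.BM \<longrightarrow> is_THM B'"
    using nat_machine[OF H.uTHM_BM] by blast
  have cB: "computes B' (\<lambda>t. f (g t))"
    using H.computes_BM[OF assms(4)] B'(2,4) unfolding computes_def by simp
  show ?thesis
  proof (intro conjI impI)
    show "\<exists>B :: (nat, nat, 'd, 'c) hm. is_uTHM B \<and> hm_in B = \<Delta> \<and> hm_outa B = hm_outa A \<and> computes B (\<lambda>t. f (g t))"
      using B' cB by (intro exI[of _ B']) simp
    assume "is_THM A"
    then have "is_THM B'" using B'(5) H.THM_BM by blast
    then show "\<exists>B :: (nat, nat, 'd, 'c) hm. is_THM B \<and> hm_in B = \<Delta> \<and> hm_outa B = hm_outa A \<and> computes B (\<lambda>t. f (g t))"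
      using B' cB by (intro exI[of _ B']) simp
  qed
qed


end
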